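(* Let $A$ be an operator algebra with a left contractive approximate identity and property $(\mathcal L)$. If $\pi:A\to B(H)$ is a completely contractive homomorphism (resp. one with $\pi(A)H$ dense in $H$), then the restriction $\pi|_{\mathcal L(A)}$ is a completely contractive homomorphism (resp. one with $\pi(\mathcal L(A))H$ dense in $H$). Conversely, if $\theta:\mathcal L(A)\to B(H)$ is a completely contractive homomorphism, then there exists a completely contractive homomorphism $\pi:A\to B(H)$ extending $\theta$; if moreover $\theta(\mathcal L(A))H$ is dense in $H$, then $\pi$ is unique and $\pi(A)H$ is dense in $H$. Finally, for any completely contractive homomorphism $\pi:A\to B(H)$, $$\{T\in B(H): T\pi(A)\subset\pi(A)\}=\{T\in B(H): T\pi(\mathcal L(A))\subset\pi(\mathcal L(A))\}.$$
   Context: An operator algebra is a (complete) algebra with matrix norms completely isometrically isomorphic, via a homomorphism, to a closed subalgebra of some $B(H)$. A left contractive approximate identity is a net $\{e_\alpha\}$ in the unit ball with $e_\alpha a\to a$ for all $a$. $A$ has property $(\mathcal L)$ if it has a left contractive approximate identity $\{e_\alpha\}$ with $e_{\alpha'}e_\alpha\to e_{\alpha'}$ for each fixed $\alpha'$; then $\mathcal L(A)=\{x\in A: xe_\alpha\to x\}$, a closed left ideal of $A$ with a two-sided contractive approximate identity satisfying $\mathcal L(A)A=A$ and $A\mathcal L(A)=\mathcal L(A)$. *)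

theory Defs
  imports "HOL-Analysis.Analysis"
begin

class chilbert = real_normed_vector + complete_space +
  fixes scaleC :: "complex \<Rightarrow> 'a \<Rightarrow> 'a"
    and cinner :: "'a \<Rightarrow> 'a \<Rightarrow> complex"
  assumes scaleC_add_right: "scaleC c (x + y) = scaleC c x + scaleC c y"
    and scaleC_add_left: "scaleC (c + d) x = scaleC c x + scaleC d x"
    and scaleC_scaleC: "scaleC c (scaleC d x) = scaleC (c * d) x"
    and scaleC_one: "scaleC 1 x = x"
    and scaleC_of_real: "scaleC (complex_of_real r) x = scaleR r x"
    and cinner_commute: "cinner x y = cnj (cinner y x)"
    and cinner_add_right: "cinner x (y + z) = cinner x y + cinner x z"
    and cinner_scaleC_right: "cinner x (scaleC c y) = c * cinner x y"
    and cinner_self_real: "Im (cinner x x) = 0"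
    and cinner_self_nonneg: "0 \<le> Re (cinner x x)"
    and cinner_self_eq_0: "cinner x x = 0 \<longleftrightarrow> x = 0"
    and norm_cinner: "norm x = sqrt (Re (cinner x x))"

definition clinear_op :: "('h::chilbert \<Rightarrow> 'h) \<Rightarrow> bool" where
  "clinear_op T \<longleftrightarrow> (\<forall>x y. T (x + y) = T x + T y) \<and> (\<forall>c x. T (scaleC c x) = scaleC c (T x))"

definition bounded_op :: "('h::chilbert \<Rightarrow> 'h) \<Rightarrow> bool" where
  "bounded_op T \<longleftrightarrow> clinear_op T \<and> (\<exists>K. \<forall>x. norm (T x) \<le> K * norm x)"

definition BH :: "('h::chilbert \<Rightarrow> 'h) set" where
  "BH = {T. bounded_op T}"

definition opnorm :: "('h::chilbert \<Rightarrow> 'h) \<Rightarrow> real" where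
  "opnorm T = Sup {norm (T x) | x. norm x \<le> 1}"

text \<open>Norm of an n x n matrix of operators on H, acting on the Hilbert direct sum H^n.\<close>
definition matnorm :: "nat \<Rightarrow> (nat \<Rightarrow> nat \<Rightarrow> ('h::chilbert \<Rightarrow> 'h)) \<Rightarrow> real" where
  "matnorm n a = Sup {sqrt (\<Sum>i<n. (norm (\<Sum>j<n. a i j (x j)))\<^sup>2) | x.
                        (\<Sum>j<n. (norm (x j))\<^sup>2) \<le> 1}"

definition op_algebra :: "('h::chilbert \<Rightarrow> 'h) set \<Rightarrow> bool" where
  "op_algebra A \<longleftrightarrow> A \<subseteq> BH \<and> (\<lambda>x. 0) \<in> A
     \<and> (\<forall>S\<in>A. \<forall>T\<in>A. (\<lambda>x. S x + T x) \<in> A)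
     \<and> (\<forall>c. \<forall>T\<in>A. (\<lambda>x. scaleC c (T x)) \<in> A)
     \<and> (\<forall>S\<in>A. \<forall>T\<in>A. S \<circ> T \<in> A)
     \<and> (\<forall>T\<in>BH. (\<forall>\<epsilon>>0. \<exists>S\<in>A. opnorm (\<lambda>x. T x - S x) < \<epsilon>) \<longrightarrow> T \<in> A)"

definition cc_hom :: "('a::chilbert \<Rightarrow> 'a) set \<Rightarrow> (('a \<Rightarrow> 'a) \<Rightarrow> ('b::chilbert \<Rightarrow> 'b)) \<Rightarrow> bool" where
  "cc_hom A \<pi> \<longleftrightarrow> (\<forall>a\<in>A. \<pi> a \<in> BH)
     \<and> (\<forall>a\<in>A. \<forall>b\<in>A. \<pi> (\<lambda>x. a x + b x) = (\<lambda>y. \<pi> a y + \<pi> b y))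
     \<and> (\<forall>c. \<forall>a\<in>A. \<pi> (\<lambda>x. scaleC c (a x)) = (\<lambda>y. scaleC c (\<pi> a y)))
     \<and> (\<forall>a\<in>A. \<forall>b\<in>A. \<pi> (a \<circ> b) = \<pi> a \<circ> \<pi> b)
     \<and> (\<forall>n\<ge>1. \<forall>a. (\<forall>i<n. \<forall>j<n. a i j \<in> A) \<longrightarrow>
           matnorm n (\<lambda>i j. \<pi> (a i j)) \<le> matnorm n a)"

definition c_span :: "'h::chilbert set \<Rightarrow> 'h set" where
  "c_span S = {\<Sum>k<m. scaleC (c k) (v k) | (m::nat) c v. \<forall>k<m. v k \<in> S}"

definition nondegenerate :: "('a::chilbert \<Rightarrow> 'a) set \<Rightarrow> (('a \<Rightarrow> 'a) \<Rightarrow> ('b::chilbert \<Rightarrow> 'b)) \<Rightarrow> bool" where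
  "nondegenerate A \<pi> \<longleftrightarrow> closure (c_span {\<pi> a \<xi> | a \<xi>. a \<in> A}) = UNIV"

definition directed_set :: "('i \<Rightarrow> 'i \<Rightarrow> bool) \<Rightarrow> bool" where
  "directed_set le \<longleftrightarrow> (\<exists>i::'i. True) \<and> (\<forall>i. le i i) \<and> (\<forall>i j k. le i j \<longrightarrow> le j k \<longrightarrow> le i k)
     \<and> (\<forall>i j. \<exists>k. le i k \<and> le j k)"

definition net_filter :: "('i \<Rightarrow> 'i \<Rightarrow> bool) \<Rightarrow> 'i filter" where
  "net_filter le = (INF i. principal {j. le i j})"

definition op_net_tendsto :: "('i \<Rightarrow> 'i \<Rightarrow> bool) \<Rightarrow> ('i \<Rightarrow> ('h::chilbert \<Rightarrow> 'h)) \<Rightarrow> ('h \<Rightarrow> 'h) \<Rightarrow> bool" where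
  "op_net_tendsto le f T \<longleftrightarrow> ((\<lambda>\<alpha>. opnorm (\<lambda>x. f \<alpha> x - T x)) \<longlongrightarrow> 0) (net_filter le)"

definition left_cai :: "('h::chilbert \<Rightarrow> 'h) set \<Rightarrow> ('i \<Rightarrow> 'i \<Rightarrow> bool) \<Rightarrow> ('i \<Rightarrow> ('h \<Rightarrow> 'h)) \<Rightarrow> bool" where
  "left_cai A le e \<longleftrightarrow> directed_set le \<and> (\<forall>\<alpha>. e \<alpha> \<in> A \<and> opnorm (e \<alpha>) \<le> 1)
     \<and> (\<forall>a\<in>A. op_net_tendsto le (\<lambda>\<alpha>. e \<alpha> \<circ> a) a)"

definition property_L :: "('h::chilbert \<Rightarrow> 'h) set \<Rightarrow> ('i \<Rightarrow> 'i \<Rightarrow> bool) \<Rightarrow> ('i \<Rightarrow> ('h \<Rightarrow> 'h)) \<Rightarrow> bool" where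
  "property_L A le e \<longleftrightarrow> left_cai A le e \<and> (\<forall>\<alpha>'. op_net_tendsto le (\<lambda>\<alpha>. e \<alpha>' \<circ> e \<alpha>) (e \<alpha>'))"

definition LA :: "('h::chilbert \<Rightarrow> 'h) set \<Rightarrow> ('i \<Rightarrow> 'i \<Rightarrow> bool) \<Rightarrow> ('i \<Rightarrow> ('h \<Rightarrow> 'h)) \<Rightarrow> ('h \<Rightarrow> 'h) set" where
  "LA A le e = {x \<in> A. op_net_tendsto le (\<lambda>\<alpha>. x \<circ> e \<alpha>) x}"

end

theory Submission
  imports Defs
begin

lemma geom_convergent:
  fixes f :: "nat \<Rightarrow> 'm::banach"
  assumes b: "\<And>n. norm (f (Suc n) - f n) \<le> C * r^n" and r: "0 \<le> r" "r < 1"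
  shows "convergent f"
proof -
  have "summable (\<lambda>n. C * r^n)" using r by (intro summable_mult summable_geometric) auto
  hence "summable (\<lambda>n. f (Suc n) - f n)"
    by (rule summable_comparison_test[rotated]) (use b in auto)
  then obtain S where S: "(\<lambda>n. f (Suc n) - f n) sums S" by (auto simp: summable_def)
  hence "(\<lambda>n. f n - f 0) \<longlonglongrightarrow> S" by (simp add: sums_def sum_lessThan_telescope)
  hence "(\<lambda>n. (f n - f 0) + f 0) \<longlonglongrightarrow> S + f 0" by (intro tendsto_add) auto
  thus ?thesis by (auto simp: convergent_def)
qed

lemma contraction_fix_in:
  fixes F :: "'m::banach \<Rightarrow> 'm"
  assumes c: "0 \<le> c" "c < 1" and con: "\<And>x y. dist (F x) (F y) \<le> c * dist x y"
    and X: "closed X" "x0 \<in> X" "\<And>x. x \<in> X \<Longrightarrow> F x \<in> X"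
  shows "\<exists>y\<in>X. F y = y"
proof -
  obtain y where y: "F y = y" using banach_fix_type[OF c] con by blast
  have d: "dist ((F ^^ n) x0) y \<le> c^n * dist x0 y" for n
  proof (induction n)
    case (Suc n)
    have "dist ((F ^^ Suc n) x0) y = dist (F ((F ^^ n) x0)) (F y)" using y by simp
    also have "\<dots> \<le> c * dist ((F ^^ n) x0) y" by (rule con)
    also have "\<dots> \<le> c * (c^n * dist x0 y)" using Suc c by (intro mult_left_mono) auto
    finally show ?case by simp
  qed simp
  have inX: "(F ^^ n) x0 \<in> X" for n by (induction n) (use X in auto)
  have "(\<lambda>n. c^n * dist x0 y) \<longlonglongrightarrow> 0 * dist x0 y"
    using c by (intro tendsto_mult LIMSEQ_power_zero) auto
  have "(\<lambda>n. dist ((F ^^ n) x0) y) \<longlonglongrightarrow> 0"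
  proof (rule tendsto_sandwich[of "\<lambda>_. 0" _ _ "\<lambda>n. c^n * dist x0 y"])
    show "\<forall>\<^sub>F n in sequentially. 0 \<le> dist ((F ^^ n) x0) y" by simp
    show "\<forall>\<^sub>F n in sequentially. dist ((F ^^ n) x0) y \<le> c^n * dist x0 y" using d by simp
  qed (use \<open>(\<lambda>n. c^n * dist x0 y) \<longlonglongrightarrow> 0 * dist x0 y\<close> in simp_all)
  hence "(\<lambda>n. (F ^^ n) x0) \<longlonglongrightarrow> y"
    using tendsto_dist_iff by blast
  hence "y \<in> X" using X inX by (meson closed_sequentially)
  thus ?thesis using y by blast
qed

lemma cohen_factor:
  fixes mul :: "'m::banach \<Rightarrow> 'm \<Rightarrow> 'm" and e :: "'i \<Rightarrow> 'm"
  assumes bb: "bounded_bilinear mul"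
    and nm: "\<And>a b. norm (mul a b) \<le> norm a * norm b"
    and assoc: "\<And>a b y. mul (mul a b) y = mul a (mul b y)"
    and Lc: "closed L" and Ladd: "\<And>a b. a \<in> L \<Longrightarrow> b \<in> L \<Longrightarrow> a + b \<in> L"
    and Lsc: "\<And>r a. a \<in> L \<Longrightarrow> r *\<^sub>R a \<in> L" and LL: "\<And>a b. a \<in> L \<Longrightarrow> b \<in> L \<Longrightarrow> mul a b \<in> L"
    and Xc: "closed X" and Xadd: "\<And>a b. a \<in> X \<Longrightarrow> b \<in> X \<Longrightarrow> a + b \<in> X"
    and Xsc: "\<And>r a. a \<in> X \<Longrightarrow> r *\<^sub>R a \<in> X" and LX: "\<And>a b. a \<in> L \<Longrightarrow> b \<in> X \<Longrightarrow> mul a b \<in> X"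
    and F: "F \<noteq> bot" and eL: "\<And>\<alpha>. e \<alpha> \<in> L" and en: "\<And>\<alpha>. norm (e \<alpha>) \<le> 1"
    and eX: "\<And>y. y \<in> X \<Longrightarrow> ((\<lambda>\<alpha>. mul (e \<alpha>) y) \<longlongrightarrow> y) F"
    and eR: "\<And>s. s \<in> L \<Longrightarrow> ((\<lambda>\<alpha>. mul s (e \<alpha>)) \<longlongrightarrow> s) F"
    and x: "x \<in> X"
  shows "\<exists>l\<in>L. \<exists>y\<in>X. x = mul l y"
proof -
  interpret bb: bounded_bilinear mul by (rule bb)
  have L0: "0 \<in> L" using Lsc[OF eL, of 0] by simp
  have solve: "\<exists>y\<in>X. (2/3) *\<^sub>R y + (1/3) *\<^sub>R mul a y = z"
    if a: "a \<in> L" "norm a \<le> 1" and z: "z \<in> X" for a z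
  proof -
    define G where "G y = (3/2) *\<^sub>R z + (-1/2) *\<^sub>R mul a y" for y
    have "\<exists>y\<in>X. G y = y"
    proof (rule contraction_fix_in[of "1/2" G X z])
      fix y1 y2
      have "dist (G y1) (G y2) = norm ((1/2) *\<^sub>R mul a (y2 - y1))"
        by (simp add: G_def dist_norm bb.diff_right algebra_simps)
      also have "\<dots> = (1/2) * norm (mul a (y2 - y1))" by simp
      also have "\<dots> \<le> (1/2) * (norm a * norm (y2 - y1))" using nm by (intro mult_left_mono) auto
      also have "\<dots> \<le> (1/2) * (1 * norm (y2 - y1))" using a by (intro mult_left_mono mult_right_mono) auto
      finally show "dist (G y1) (G y2) \<le> 1/2 * dist y1 y2" by (simp add: dist_norm norm_minus_commute)
    next
      fix y assume "y \<in> X" thus "G y \<in> X" unfolding G_def using a z by (intro Xadd Xsc LX) auto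
    qed (use Xc z in auto)
    then obtain y where "y \<in> X" "G y = y" by blast
    have "(2/3) *\<^sub>R y + (1/3) *\<^sub>R mul a y = (2/3) *\<^sub>R G y + (1/3) *\<^sub>R mul a y"
      using \<open>G y = y\<close> by simp
    also have "\<dots> = z" by (simp add: G_def algebra_simps)
    finally have "(2/3) *\<^sub>R y + (1/3) *\<^sub>R mul a y = z" .
    thus ?thesis using \<open>y \<in> X\<close> by blast
  qed
  have pick: "\<exists>\<alpha>. norm (mul (e \<alpha>) y - y) < (1/2)^n \<and> norm (mul s (e \<alpha>) - s) < (1/2)^n"
    if "y \<in> X" "s \<in> L" for y s and n :: nat
  proof -
    have "\<forall>\<^sub>F \<alpha> in F. dist (mul (e \<alpha>) y) y < (1/2)^n"
      using eX[OF that(1)] by (rule tendstoD) simp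
    moreover have "\<forall>\<^sub>F \<alpha> in F. dist (mul s (e \<alpha>)) s < (1/2)^n"
      using eR[OF that(2)] by (rule tendstoD) simp
    ultimately have "\<forall>\<^sub>F \<alpha> in F. norm (mul (e \<alpha>) y - y) < (1/2)^n \<and> norm (mul s (e \<alpha>) - s) < (1/2)^n"
      by eventually_elim (simp add: dist_norm)
    thus ?thesis using F eventually_happens by blast
  qed
  define ch where "ch n y s = (SOME \<alpha>. norm (mul (e \<alpha>) y - y) < (1/2)^n \<and> norm (mul s (e \<alpha>) - s) < (1/2)^n)"
    for n :: nat and y s
  define sol where "sol a z = (SOME y. y \<in> X \<and> (2/3) *\<^sub>R y + (1/3) *\<^sub>R mul a y = z)" for a z
  define step where "step n p = (let a = e (ch n (fst p) (snd p)) in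
      (sol a (fst p), (2/3) *\<^sub>R snd p + (1/3) *\<^sub>R mul (snd p) a + ((1/3) * (2/3)^n) *\<^sub>R a))"
    for n :: nat and p :: "'m \<times> 'm"
  define sq where "sq = rec_nat (x, 0) step"
  define Y where "Y n = fst (sq n)" for n
  define S where "S n = snd (sq n)" for n
  define E where "E n = e (ch n (Y n) (S n))" for n
  have sq0: "Y 0 = x" "S 0 = 0" by (simp_all add: Y_def S_def sq_def)
  have sqS: "Y (Suc n) = sol (E n) (Y n)"
     "S (Suc n) = (2/3) *\<^sub>R S n + (1/3) *\<^sub>R mul (S n) (E n) + ((1/3) * (2/3)^n) *\<^sub>R E n" for n
    by (simp_all add: Y_def S_def sq_def E_def step_def Let_def)
  have inv: "Y n \<in> X \<and> S n \<in> L \<and> x = (2/3)^n *\<^sub>R Y n + mul (S n) (Y n)" for n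
  proof (induction n)
    case 0 thus ?case using x L0 by (simp add: sq0 bb.zero_left)
  next
    case (Suc n)
    have aL: "E n \<in> L" "norm (E n) \<le> 1" using eL en by (auto simp: E_def)
    have "\<exists>y. y \<in> X \<and> (2/3) *\<^sub>R y + (1/3) *\<^sub>R mul (E n) y = Y n"
      using solve[OF aL] Suc by blast
    hence y': "Y (Suc n) \<in> X" "(2/3) *\<^sub>R Y (Suc n) + (1/3) *\<^sub>R mul (E n) (Y (Suc n)) = Y n"
      unfolding sqS sol_def by (metis (mono_tags, lifting) someI_ex)+
    have SL: "S (Suc n) \<in> L" unfolding sqS using Suc aL by (intro Ladd Lsc LL) auto
    have "x = (2/3)^n *\<^sub>R Y n + mul (S n) (Y n)" using Suc by simp
    also have "\<dots> = (2/3)^n *\<^sub>R ((2/3) *\<^sub>R Y (Suc n) + (1/3) *\<^sub>R mul (E n) (Y (Suc n)))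
        + mul (S n) ((2/3) *\<^sub>R Y (Suc n) + (1/3) *\<^sub>R mul (E n) (Y (Suc n)))"
      using y' by simp
    also have "\<dots> = (2/3)^(Suc n) *\<^sub>R Y (Suc n) + mul (S (Suc n)) (Y (Suc n))"
      unfolding sqS by (simp add: bb.add_left bb.add_right bb.scaleR_left bb.scaleR_right assoc algebra_simps)
    finally show ?case using y' SL by simp
  qed
  have chp: "norm (mul (E n) (Y n) - Y n) < (1/2)^n \<and> norm (mul (S n) (E n) - S n) < (1/2)^n" for n
  proof -
    have "\<exists>\<alpha>. norm (mul (e \<alpha>) (Y n) - Y n) < (1/2)^n \<and> norm (mul (S n) (e \<alpha>) - S n) < (1/2)^n"
      using pick[of "Y n" "S n" n] inv[of n] by blast
    from someI_ex[OF this] show ?thesis unfolding E_def ch_def .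
  qed
  have h23: "(1/2::real)^n \<le> (2/3)^n" for n by (intro power_mono) auto
  have dY: "norm (Y (Suc n) - Y n) \<le> 1 * (2/3)^n" for n
  proof -
    have aL: "E n \<in> L" "norm (E n) \<le> 1" using eL en by (auto simp: E_def)
    have "\<exists>y. y \<in> X \<and> (2/3) *\<^sub>R y + (1/3) *\<^sub>R mul (E n) y = Y n"
      using solve[OF aL] inv[of n] by blast
    hence y': "(2/3) *\<^sub>R Y (Suc n) + (1/3) *\<^sub>R mul (E n) (Y (Suc n)) = Y n"
      unfolding sqS sol_def by (metis (mono_tags, lifting) someI_ex)
    define w where "w = Y (Suc n) - mul (E n) (Y (Suc n))"
    define d where "d = Y n - mul (E n) (Y n)"
    have wd: "(2/3) *\<^sub>R w + (1/3) *\<^sub>R mul (E n) w = d"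
      unfolding w_def d_def y'[symmetric]
      by (simp add: bb.add_right bb.scaleR_right bb.diff_right algebra_simps)
    have "norm (mul (E n) w) \<le> norm (E n) * norm w" by (rule nm)
    also have "\<dots> \<le> 1 * norm w" using aL(2) by (intro mult_right_mono) auto
    finally have nw: "norm (mul (E n) w) \<le> norm w" by simp
    have "norm ((2/3) *\<^sub>R w) - norm ((1/3) *\<^sub>R mul (E n) w) \<le> norm d"
      unfolding wd[symmetric] by (rule norm_diff_ineq)
    hence "norm d \<ge> (2/3) * norm w - (1/3) * norm w" using nw by simp
    moreover have "Y (Suc n) - Y n = (1/3) *\<^sub>R w"
      unfolding y'[symmetric] w_def by (simp add: algebra_simps flip: scaleR_add_left)
    ultimately have "norm (Y (Suc n) - Y n) \<le> norm d" by simp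
    also have "\<dots> < (1/2)^n" using chp[of n] by (simp add: d_def norm_minus_commute)
    finally show ?thesis using h23[of n] by simp
  qed
  have dS: "norm (S (Suc n) - S n) \<le> 1 * (2/3)^n" for n
  proof -
    have "S (Suc n) - S n = (1/3) *\<^sub>R (mul (S n) (E n) - S n) + ((1/3) * (2/3)^n) *\<^sub>R E n"
      unfolding sqS by (simp add: algebra_simps flip: scaleR_add_left)
    hence "norm (S (Suc n) - S n) \<le> norm ((1/3) *\<^sub>R (mul (S n) (E n) - S n)) + norm (((1/3) * (2/3)^n) *\<^sub>R E n)"
      using norm_triangle_ineq by metis
    hence "norm (S (Suc n) - S n) \<le> (1/3) * norm (mul (S n) (E n) - S n) + (1/3) * (2/3)^n * norm (E n)"
      by simp
    also have "\<dots> \<le> (1/3) * (2/3)^n + (1/3) * (2/3)^n * 1"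
      using chp[of n] h23[of n] en[of "ch n (Y n) (S n)"] unfolding E_def
      by (intro add_mono mult_left_mono) auto
    also have "\<dots> \<le> 1 * (2/3)^n" by simp
    finally show ?thesis .
  qed
  obtain y where y: "Y \<longlonglongrightarrow> y" using geom_convergent[of Y 1 "2/3"] dY by (auto simp: convergent_def)
  obtain s where s: "S \<longlonglongrightarrow> s" using geom_convergent[of S 1 "2/3"] dS by (auto simp: convergent_def)
  have yX: "y \<in> X" by (rule closed_sequentially[OF Xc _ y]) (use inv in simp)
  have sL: "s \<in> L" by (rule closed_sequentially[OF Lc _ s]) (use inv in simp)
  have "(\<lambda>n. (2/3)^n *\<^sub>R Y n + mul (S n) (Y n)) \<longlonglongrightarrow> 0 *\<^sub>R y + mul s y"
    by (intro tendsto_add tendsto_scaleR bb.tendsto y s LIMSEQ_power_zero) auto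
  moreover have "(\<lambda>n. (2/3)^n *\<^sub>R Y n + mul (S n) (Y n)) = (\<lambda>n. x)" using inv by (intro ext) simp
  ultimately have "(\<lambda>n. x) \<longlonglongrightarrow> mul s y" by simp
  hence "x = mul s y" by (rule LIMSEQ_const_iff[THEN iffD1])
  thus ?thesis using yX sL by blast
qed

lemma scaleC_zero_right[simp]: "scaleC c (0::'a::chilbert) = 0"
  using scaleC_add_right[of c 0 0] by simp
lemma scaleC_zero_left[simp]: "scaleC 0 (x::'a::chilbert) = 0"
  using scaleC_of_real[of 0 x] by simp
lemma scaleC_minus_right: "scaleC c (- x) = - scaleC c (x::'a::chilbert)"
  using scaleC_add_right[of c x "-x"] by (metis add.commute add_eq_0_iff2 scaleC_zero_right right_minus)
lemma scaleC_diff_right: "scaleC c (x - y) = scaleC c x - scaleC c (y::'a::chilbert)"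
  using scaleC_add_right[of c x "-y"] scaleC_minus_right by simp
lemma scaleC_scaleR: "scaleC c (scaleR r x) = scaleR r (scaleC c (x::'a::chilbert))"
  by (metis scaleC_of_real scaleC_scaleC mult.commute)
lemma scaleC_minus_left: "scaleC (- c) x = - scaleC c (x::'a::chilbert)"
  using scaleC_add_left[of c "-c" x] by (metis add.commute add_eq_0_iff2 scaleC_zero_left right_minus)
lemma scaleC_sum: "scaleC c (sum f S) = sum (\<lambda>i. scaleC c (f i)) S" for f :: "_ \<Rightarrow> 'a::chilbert"
  by (induction S rule: infinite_finite_induct) (simp_all add: scaleC_add_right)
lemma cinner_add_left: "cinner (x + y) z = cinner x z + cinner y (z::'a::chilbert)"
  by (metis cinner_commute cinner_add_right complex_cnj_add)
lemma cinner_scaleC_left: "cinner (scaleC c x) y = cnj c * cinner x (y::'a::chilbert)"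
  by (metis cinner_commute cinner_scaleC_right complex_cnj_mult complex_cnj_cnj)
lemma cinner_zero_right[simp]: "cinner x (0::'a::chilbert) = 0"
  using cinner_add_right[of x 0 0] by simp
lemma cinner_zero_left[simp]: "cinner 0 (x::'a::chilbert) = 0"
  using cinner_add_left[of 0 0 x] by simp
lemma cinner_minus_right: "cinner x (- y) = - cinner x (y::'a::chilbert)"
  using cinner_add_right[of x y "-y"] by (metis add.commute add_eq_0_iff2 cinner_zero_right right_minus)
lemma cinner_minus_left: "cinner (- x) y = - cinner x (y::'a::chilbert)"
  using cinner_add_left[of x "-x" y] by (metis add.commute add_eq_0_iff2 cinner_zero_left right_minus)
lemma cinner_diff_right: "cinner x (y - z) = cinner x y - cinner x (z::'a::chilbert)"
  using cinner_add_right[of x y "-z"] cinner_minus_right by simp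
lemma cinner_diff_left: "cinner (x - y) z = cinner x z - cinner y (z::'a::chilbert)"
  using cinner_add_left[of x "-y" z] cinner_minus_left by simp
lemma cinner_scaleR_right: "cinner x (scaleR r y) = of_real r * cinner x (y::'a::chilbert)"
  by (metis cinner_scaleC_right scaleC_of_real)
lemma cinner_scaleR_left: "cinner (scaleR r x) y = of_real r * cinner x (y::'a::chilbert)"
  by (metis cinner_scaleC_left scaleC_of_real complex_cnj_complex_of_real)
lemma cinner_self: "cinner x x = of_real ((norm (x::'a::chilbert))^2)"
proof -
  have "(norm x)^2 = Re (cinner x x)" using norm_cinner[of x] cinner_self_nonneg[of x] by simp
  thus ?thesis using cinner_self_real[of x] by (simp add: complex_eq_iff)
qed
lemma norm_scaleC: "norm (scaleC c x) = cmod c * norm (x::'a::chilbert)"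
proof -
  have "of_real ((norm (scaleC c x))^2) = (of_real ((cmod c * norm x)^2) :: complex)"
    unfolding cinner_self[symmetric] cinner_scaleC_left cinner_scaleC_right
    by (simp add: cinner_self power_mult_distrib complex_norm_square mult_ac flip: of_real_power)
  hence "(norm (scaleC c x))^2 = (cmod c * norm x)^2" using of_real_eq_iff by blast
  thus ?thesis by (simp add: power2_eq_iff_nonneg)
qed
lemma norm_add_sq: "(norm (x + y))^2 = (norm x)^2 + (norm y)^2 + 2 * Re (cinner x (y::'a::chilbert))"
proof -
  have "of_real ((norm (x + y))^2) = cinner x x + cinner y y + (cinner x y + cinner y x)"
    unfolding cinner_self[symmetric] by (simp add: cinner_add_left cinner_add_right algebra_simps)
  also have "cinner y x = cnj (cinner x y)" by (rule cinner_commute)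
  finally have "(of_real ((norm (x + y))^2) :: complex) = of_real ((norm x)^2 + (norm y)^2 + 2 * Re (cinner x y))"
    by (simp add: cinner_self complex_add_cnj)
  thus ?thesis using of_real_eq_iff by blast
qed
lemma bounded_linear_scaleC: "bounded_linear (scaleC c :: 'a::chilbert \<Rightarrow> 'a)"
  by (rule bounded_linear_intro[where K="cmod c"]) (auto simp: scaleC_add_right scaleC_scaleR norm_scaleC)

lemma BH_iff: "T \<in> BH \<longleftrightarrow> clinear_op T \<and> (\<exists>K. \<forall>x. norm (T x) \<le> K * norm x)"
  by (simp add: BH_def bounded_op_def)

lemma BH_add: "T \<in> BH \<Longrightarrow> T (x + y) = T x + T y"
  by (simp add: BH_iff clinear_op_def)
lemma BH_scaleC: "T \<in> BH \<Longrightarrow> T (scaleC c x) = scaleC c (T x)"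
  by (simp add: BH_iff clinear_op_def)
lemma BH_scaleR: "T \<in> BH \<Longrightarrow> T (scaleR r x) = scaleR r (T x)"
  by (metis BH_scaleC scaleC_of_real)
lemma BH_bl: "T \<in> BH \<Longrightarrow> bounded_linear T"
proof -
  assume T: "T \<in> BH"
  then obtain K where K: "\<forall>x. norm (T x) \<le> K * norm x" by (auto simp: BH_iff)
  show ?thesis by (rule bounded_linear_intro[where K=K]) (use T K BH_add BH_scaleR in \<open>auto simp: mult.commute\<close>)
qed
lemma BH_zero: "T \<in> BH \<Longrightarrow> T 0 = 0" using BH_bl linear_simps(3) bounded_linear.linear by blast
lemma BH_diff: "T \<in> BH \<Longrightarrow> T (x - y) = T x - T y"
  using linear_diff[OF bounded_linear.linear[OF BH_bl]] by blast
lemma BH_minus: "T \<in> BH \<Longrightarrow> T (- x) = - T x"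
  using linear_neg[OF bounded_linear.linear[OF BH_bl]] by blast
lemma BH_sum: "T \<in> BH \<Longrightarrow> T (sum f S) = sum (\<lambda>i. T (f i)) S"
  using linear_sum[OF bounded_linear.linear[OF BH_bl]] by blast

lemma BH_I: "(\<And>x y. T (x + y) = T x + T y) \<Longrightarrow> (\<And>c x. T (scaleC c x) = scaleC c (T x))
   \<Longrightarrow> (\<And>x. norm (T x) \<le> K * norm x) \<Longrightarrow> T \<in> BH"
  by (auto simp: BH_iff clinear_op_def)

lemma opnorm_eq: assumes "T \<in> BH" shows "opnorm T = onorm T"
proof -
  have bl: "bounded_linear T" using assms by (rule BH_bl)
  have ne: "{norm (T x) |x. norm x \<le> 1} \<noteq> {}" by (auto intro!: exI[of _ 0])
  have bd: "norm (T x) \<le> onorm T" if "norm x \<le> 1" for x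
    using onorm[OF bl, of x] that onorm_pos_le[OF bl] by (meson mult_left_le order_trans)
  have le1: "opnorm T \<le> onorm T" unfolding opnorm_def by (rule cSup_least[OF ne]) (use bd in auto)
  have bdd: "bdd_above {norm (T x) |x. norm x \<le> 1}" by (rule bdd_aboveI[of _ "onorm T"]) (use bd in auto)
  have "norm (T x) \<le> opnorm T * norm x" for x
  proof (cases "x = 0")
    case True thus ?thesis using BH_zero[OF assms] by simp
  next
    case False
    hence "norm (T (scaleR (1/norm x) x)) \<le> opnorm T" unfolding opnorm_def
      by (intro cSup_upper[OF _ bdd]) auto
    thus ?thesis using False BH_scaleR[OF assms] by (simp add: field_simps)
  qed
  moreover have "0 \<le> opnorm T" unfolding opnorm_def by (rule cSup_upper2[OF _ _ bdd, of 0]) (auto intro!: exI[of _ 0] simp: BH_zero[OF assms])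
  ultimately have "onorm T \<le> opnorm T" using onorm_bound by blast
  thus ?thesis using le1 by simp
qed

lemma opnorm_bound: "T \<in> BH \<Longrightarrow> norm (T x) \<le> opnorm T * norm x"
  by (simp add: opnorm_eq onorm BH_bl)
lemma opnorm_nonneg: "T \<in> BH \<Longrightarrow> 0 \<le> opnorm T"
  by (simp add: opnorm_eq onorm_pos_le BH_bl)
lemma opnorm_le: "T \<in> BH \<Longrightarrow> 0 \<le> b \<Longrightarrow> (\<And>x. norm (T x) \<le> b * norm x) \<Longrightarrow> opnorm T \<le> b"
  by (simp add: opnorm_eq onorm_bound)

lemma BH_comp: assumes S: "S \<in> BH" and T: "T \<in> BH" shows "S \<circ> T \<in> BH"
proof (rule BH_I[where K="opnorm S * opnorm T"])
  fix x
  have "norm (S (T x)) \<le> opnorm S * norm (T x)" by (rule opnorm_bound[OF S])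
  also have "\<dots> \<le> opnorm S * (opnorm T * norm x)"
    by (rule mult_left_mono[OF opnorm_bound[OF T] opnorm_nonneg[OF S]])
  finally show "norm ((S \<circ> T) x) \<le> opnorm S * opnorm T * norm x" by (simp add: mult.assoc)
qed (simp_all add: BH_add[OF S] BH_add[OF T] BH_scaleC[OF S] BH_scaleC[OF T])

lemma BH_plus: assumes S: "S \<in> BH" and T: "T \<in> BH" shows "(\<lambda>x. S x + T x) \<in> BH"
proof (rule BH_I[where K="opnorm S + opnorm T"])
  fix x
  have "norm (S x + T x) \<le> norm (S x) + norm (T x)" by (rule norm_triangle_ineq)
  also have "\<dots> \<le> opnorm S * norm x + opnorm T * norm x"
    by (rule add_mono[OF opnorm_bound[OF S] opnorm_bound[OF T]])
  finally show "norm (S x + T x) \<le> (opnorm S + opnorm T) * norm x" by (simp add: distrib_right)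
qed (simp_all add: BH_add[OF S] BH_add[OF T] BH_scaleC[OF S] BH_scaleC[OF T] scaleC_add_right)

lemma BH_sc: assumes T: "T \<in> BH" shows "(\<lambda>x. scaleC c (T x)) \<in> BH"
proof (rule BH_I[where K="cmod c * opnorm T"])
  fix x
  have "norm (scaleC c (T x)) = cmod c * norm (T x)" by (rule norm_scaleC)
  also have "\<dots> \<le> cmod c * (opnorm T * norm x)" by (rule mult_left_mono[OF opnorm_bound[OF T]]) simp
  finally show "norm (scaleC c (T x)) \<le> cmod c * opnorm T * norm x" by (simp add: mult.assoc)
qed (simp_all add: BH_add[OF T] BH_scaleC[OF T] scaleC_add_right scaleC_scaleC mult.commute)

lemma BH_minusf: "S \<in> BH \<Longrightarrow> T \<in> BH \<Longrightarrow> (\<lambda>x. S x - T x) \<in> BH"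
proof -
  assume "S \<in> BH" "T \<in> BH"
  hence "(\<lambda>x. S x + scaleC (-1) (T x)) \<in> BH" by (intro BH_plus BH_sc)
  thus ?thesis by (simp add: scaleC_minus_left scaleC_one)
qed
lemma BH_id: "(\<lambda>x. x) \<in> BH" by (rule BH_I[where K=1]) auto
lemma BH_zerof: "(\<lambda>x. 0) \<in> BH" by (rule BH_I[where K=0]) auto

definition B :: "('h::chilbert \<Rightarrow> 'h) \<Rightarrow> ('h \<Rightarrow>\<^sub>L 'h)" where "B T = Blinfun T"

lemma B_apply: "T \<in> BH \<Longrightarrow> blinfun_apply (B T) = T"
  by (simp add: B_def bounded_linear_Blinfun_apply BH_bl)
lemma B_norm: "T \<in> BH \<Longrightarrow> norm (B T) = opnorm T"
  by (simp add: norm_blinfun.rep_eq B_apply opnorm_eq)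
lemma B_comp: "S \<in> BH \<Longrightarrow> T \<in> BH \<Longrightarrow> B (S \<circ> T) = B S o\<^sub>L B T"
  by (intro blinfun_eqI) (simp add: B_apply BH_comp blinfun_compose.rep_eq)
lemma B_plus: "S \<in> BH \<Longrightarrow> T \<in> BH \<Longrightarrow> B (\<lambda>x. S x + T x) = B S + B T"
  by (intro blinfun_eqI) (simp add: B_apply BH_plus plus_blinfun.rep_eq)
lemma B_minus: "S \<in> BH \<Longrightarrow> T \<in> BH \<Longrightarrow> B (\<lambda>x. S x - T x) = B S - B T"
  by (intro blinfun_eqI) (simp add: B_apply BH_minusf minus_blinfun.rep_eq)
lemma B_inj: "S \<in> BH \<Longrightarrow> T \<in> BH \<Longrightarrow> B S = B T \<Longrightarrow> S = T"
  by (metis B_apply)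
lemma opnorm_diff_B: "S \<in> BH \<Longrightarrow> T \<in> BH \<Longrightarrow> opnorm (\<lambda>x. S x - T x) = norm (B S - B T)"
  by (simp add: B_minus[symmetric] B_norm BH_minusf)

lemma opnorm_comp: "S \<in> BH \<Longrightarrow> T \<in> BH \<Longrightarrow> opnorm (S \<circ> T) \<le> opnorm S * opnorm T"
  by (simp add: opnorm_eq BH_comp onorm_compose BH_bl)

lemma directedD:
  assumes "directed_set le"
  shows "le i i" "le i j \<Longrightarrow> le j k \<Longrightarrow> le i k" "\<exists>k. le i k \<and> le j k"
proof -
  have d: "(\<forall>i. le i i) \<and> (\<forall>i j k. le i j \<longrightarrow> le j k \<longrightarrow> le i k) \<and> (\<forall>i j. \<exists>k. le i k \<and> le j k)"
    using assms unfolding directed_set_def by (elim conjE) (intro conjI)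
  show "le i i" using d by metis
  show "le i j \<Longrightarrow> le j k \<Longrightarrow> le i k" using d by metis
  show "\<exists>k. le i k \<and> le j k" using d by metis
qed

lemma net_eventually:
  assumes "directed_set le"
  shows "eventually P (net_filter le) \<longleftrightarrow> (\<exists>i. \<forall>j. le i j \<longrightarrow> P j)"
proof -
  have "eventually P (net_filter le) \<longleftrightarrow> (\<exists>i\<in>UNIV. eventually P (principal {j. le i j}))"
    unfolding net_filter_def
  proof (rule eventually_INF_base)
    fix a b
    obtain k where "le a k" "le b k" using directedD(3)[OF assms] by blast
    hence "{j. le k j} \<subseteq> {j. le a j} \<inter> {j. le b j}" using directedD(2)[OF assms] by blast
    hence "principal {j. le k j} \<le> inf (principal {j. le a j}) (principal {j. le b j})"
      unfolding inf_principal principal_le_iff .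
    thus "\<exists>x\<in>UNIV. principal {j. le x j} \<le> inf (principal {j. le a j}) (principal {j. le b j})"
      by blast
  qed simp
  thus ?thesis unfolding eventually_principal by blast
qed

lemma net_nontriv: assumes "directed_set le" shows "net_filter le \<noteq> bot"
proof
  assume "net_filter le = bot"
  hence "eventually (\<lambda>_. False) (net_filter le)" by (simp only: eventually_bot)
  hence "\<exists>i. \<forall>j. le i j \<longrightarrow> False" by (simp only: net_eventually[OF assms])
  then obtain i where "\<forall>j. le i j \<longrightarrow> False" ..
  thus False using directedD(1)[OF assms, of i] by simp
qed

lemma ont_B:
  assumes "\<And>\<alpha>. f \<alpha> \<in> BH" "T \<in> BH"
  shows "op_net_tendsto le f T \<longleftrightarrow> ((\<lambda>\<alpha>. B (f \<alpha>)) \<longlongrightarrow> B T) (net_filter le)"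
  unfolding op_net_tendsto_def tendsto_dist_iff[of "\<lambda>\<alpha>. B (f \<alpha>)"] dist_norm
  using assms by (simp add: opnorm_diff_B)

lemma blinfun_comp_assoc: "(a o\<^sub>L b) o\<^sub>L c = a o\<^sub>L (b o\<^sub>L c)"
  by (intro blinfun_eqI) simp

lemma BH_scR: "T \<in> BH \<Longrightarrow> (\<lambda>x. r *\<^sub>R T x) \<in> BH"
  using BH_sc[of T "complex_of_real r"] by (simp add: scaleC_of_real)
lemma B_scaleR: "T \<in> BH \<Longrightarrow> B (\<lambda>x. scaleC (complex_of_real r) (T x)) = r *\<^sub>R B T"
  by (intro blinfun_eqI) (simp add: B_apply BH_scR scaleC_of_real scaleR_blinfun.rep_eq)

lemma sum1: "(\<Sum>j<(1::nat). f j) = f 0" by simp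
lemma sum1c: "(\<Sum>j<(1::nat). c) = c" by simp

lemma matnorm1: assumes "T \<in> BH" shows "matnorm 1 (\<lambda>i j. T) = opnorm T"
proof -
  have e: "{sqrt (\<Sum>i<(1::nat). (norm (\<Sum>j<(1::nat). (\<lambda>i j. T) i j (x j)))\<^sup>2) | x. (\<Sum>j<(1::nat). (norm (x j))\<^sup>2) \<le> 1}
        = {sqrt ((norm (T (x (0::nat))))\<^sup>2) | x. (norm (x (0::nat)))\<^sup>2 \<le> 1}"
    by (simp only: sum1 sum1c)
  have "{sqrt ((norm (T (x (0::nat))))\<^sup>2) | x. (norm (x (0::nat)))\<^sup>2 \<le> 1} = {norm (T x) | x. norm x \<le> 1}" (is "?S = ?T")
  proof
    show "?S \<subseteq> ?T"
    proof
      fix z assume "z \<in> ?S"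
      then obtain x where "z = sqrt ((norm (T (x (0::nat))))\<^sup>2)" "(norm (x (0::nat)))\<^sup>2 \<le> 1" by blast
      moreover have "norm (x (0::nat)) \<le> 1" using \<open>(norm (x (0::nat)))\<^sup>2 \<le> 1\<close>
        by (metis abs_norm_cancel abs_square_le_1)
      ultimately show "z \<in> ?T" by auto
    qed
    show "?T \<subseteq> ?S"
    proof
      fix z assume "z \<in> ?T"
      then obtain v where "z = norm (T v)" "norm v \<le> 1" by blast
      moreover have "(norm v)\<^sup>2 \<le> 1" using \<open>norm v \<le> 1\<close> by (simp add: power_le_one)
      ultimately show "z \<in> ?S" by (intro CollectI exI[of _ "\<lambda>_. v"]) simp
    qed
  qed
  thus ?thesis unfolding matnorm_def opnorm_def e by simp
qed

lemma cc_contr: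
  assumes "cc_hom S \<theta>" "s \<in> S" "s \<in> BH"
  shows "opnorm (\<theta> s) \<le> opnorm s"
proof -
  have "\<forall>n\<ge>1. \<forall>a. (\<forall>i<n. \<forall>j<n. a i j \<in> S) \<longrightarrow> matnorm n (\<lambda>i j. \<theta> (a i j)) \<le> matnorm n a"
    using assms(1) unfolding cc_hom_def by (elim conjE)
  hence "matnorm 1 (\<lambda>i j. \<theta> ((\<lambda>i j. s) i j)) \<le> matnorm 1 (\<lambda>i j. s)"
    using assms(2) by simp
  moreover have "\<theta> s \<in> BH" using assms unfolding cc_hom_def by blast
  moreover have "matnorm 1 (\<lambda>i j. \<theta> s) = opnorm (\<theta> s)" by (rule matnorm1) fact
  moreover have "matnorm 1 (\<lambda>i j. s) = opnorm s" by (rule matnorm1) fact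
  ultimately show ?thesis by linarith
qed

lemma cc_BH: "cc_hom S \<theta> \<Longrightarrow> s \<in> S \<Longrightarrow> \<theta> s \<in> BH" by (simp add: cc_hom_def)
lemma cc_add: "cc_hom S \<theta> \<Longrightarrow> a \<in> S \<Longrightarrow> b \<in> S \<Longrightarrow> \<theta> (\<lambda>x. a x + b x) = (\<lambda>y. \<theta> a y + \<theta> b y)"
  by (simp add: cc_hom_def)
lemma cc_sc: "cc_hom S \<theta> \<Longrightarrow> a \<in> S \<Longrightarrow> \<theta> (\<lambda>x. scaleC c (a x)) = (\<lambda>y. scaleC c (\<theta> a y))"
  by (simp add: cc_hom_def)
lemma cc_mult: "cc_hom S \<theta> \<Longrightarrow> a \<in> S \<Longrightarrow> b \<in> S \<Longrightarrow> \<theta> (a \<circ> b) = \<theta> a \<circ> \<theta> b"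
  by (simp add: cc_hom_def)

lemma cc_diff:
  assumes h: "cc_hom S \<theta>" and a: "a \<in> S" and b: "b \<in> S"
    and Ssc: "(\<lambda>x. scaleC (-1) (b x)) \<in> S"
  shows "\<theta> (\<lambda>x. a x - b x) = (\<lambda>y. \<theta> a y - \<theta> b y)"
proof -
  have "(\<lambda>x. a x - b x) = (\<lambda>x. a x + (\<lambda>x. scaleC (-1) (b x)) x)"
    by (simp add: scaleC_minus_left scaleC_one)
  hence "\<theta> (\<lambda>x. a x - b x) = (\<lambda>y. \<theta> a y + \<theta> (\<lambda>x. scaleC (-1) (b x)) y)"
    using cc_add[OF h a Ssc] by simp
  also have "\<dots> = (\<lambda>y. \<theta> a y - \<theta> b y)" using cc_sc[OF h b, of "-1"]
    by (simp add: scaleC_minus_left scaleC_one)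
  finally show ?thesis .
qed

lemma cc_lip:
  assumes h: "cc_hom S \<theta>" and a: "a \<in> S" and b: "b \<in> S" and SB: "S \<subseteq> BH"
    and Ssc: "\<And>c x. x \<in> S \<Longrightarrow> (\<lambda>z. scaleC c (x z)) \<in> S"
    and Sadd: "\<And>x y. x \<in> S \<Longrightarrow> y \<in> S \<Longrightarrow> (\<lambda>z. x z + y z) \<in> S"
  shows "norm (\<theta> a \<xi> - \<theta> b \<xi>) \<le> norm (B a - B b) * norm \<xi>"
proof -
  have mb: "(\<lambda>x. scaleC (-1) (b x)) \<in> S" by (rule Ssc[OF b])
  have dS: "(\<lambda>x. a x - b x) \<in> S" using Sadd[OF a mb] by (simp add: scaleC_minus_left scaleC_one)
  have "norm (\<theta> a \<xi> - \<theta> b \<xi>) = norm (\<theta> (\<lambda>x. a x - b x) \<xi>)" using cc_diff[OF h a b mb] by simp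
  also have "\<dots> \<le> opnorm (\<theta> (\<lambda>x. a x - b x)) * norm \<xi>" by (rule opnorm_bound[OF cc_BH[OF h dS]])
  also have "\<dots> \<le> opnorm (\<lambda>x. a x - b x) * norm \<xi>"
    by (rule mult_right_mono[OF cc_contr[OF h dS]]) (use dS SB in auto)
  also have "opnorm (\<lambda>x. a x - b x) = norm (B a - B b)" using a b SB by (intro opnorm_diff_B) auto
  finally show ?thesis .
qed

context chilbert begin
subclass banach ..
end

lemma tendsto_by_bound:
  assumes "(g \<longlongrightarrow> 0) F" "\<And>x. norm (f x - l) \<le> g x"
  shows "(f \<longlongrightarrow> l) F"
proof -
  have "((\<lambda>x. f x - l) \<longlongrightarrow> 0) F"
    by (rule Lim_null_comparison[OF _ assms(1)]) (use assms(2) in simp)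
  thus ?thesis by (rule LIM_zero_cancel)
qed

lemma Btend_pt:
  assumes "((\<lambda>\<alpha>. B (f \<alpha>)) \<longlongrightarrow> B T) F"
    and "\<And>\<alpha>. norm (g \<alpha> - l) \<le> norm (B (f \<alpha>) - B T) * c"
  shows "(g \<longlongrightarrow> l) F"
proof (rule tendsto_by_bound[OF _ assms(2)])
  have "((\<lambda>\<alpha>. B (f \<alpha>) - B T) \<longlongrightarrow> 0) F" using assms(1) by (rule LIM_zero)
  hence "((\<lambda>\<alpha>. norm (B (f \<alpha>) - B T)) \<longlongrightarrow> 0) F" by (rule tendsto_norm_zero)
  thus "((\<lambda>\<alpha>. norm (B (f \<alpha>) - B T) * c) \<longlongrightarrow> 0) F" by (rule tendsto_mult_left_zero)
qed

lemma opnorm_scC: "T \<in> BH \<Longrightarrow> opnorm (\<lambda>z. scaleC c (T z)) \<le> cmod c * opnorm T"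
proof (rule opnorm_le[OF BH_sc])
  fix x assume T: "T \<in> BH"
  have "norm (scaleC c (T x)) = cmod c * norm (T x)" by (rule norm_scaleC)
  also have "\<dots> \<le> cmod c * (opnorm T * norm x)" by (rule mult_left_mono[OF opnorm_bound[OF T]]) simp
  finally show "norm (scaleC c (T x)) \<le> cmod c * opnorm T * norm x" by (simp add: mult.assoc)
qed (auto intro!: mult_nonneg_nonneg opnorm_nonneg)

locale PL =
  fixes A :: "('a::chilbert \<Rightarrow> 'a) set" and le :: "'i \<Rightarrow> 'i \<Rightarrow> bool" and e :: "'i \<Rightarrow> ('a \<Rightarrow> 'a)"
  assumes opA: "op_algebra A" and pL: "property_L A le e"
begin

abbreviation "L \<equiv> LA A le e"
abbreviation "N \<equiv> net_filter le"

lemma A_BH: "a \<in> A \<Longrightarrow> a \<in> BH" using opA by (auto simp: op_algebra_def)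
lemma A_add: "a \<in> A \<Longrightarrow> b \<in> A \<Longrightarrow> (\<lambda>x. a x + b x) \<in> A" using opA by (simp add: op_algebra_def)
lemma A_sc: "a \<in> A \<Longrightarrow> (\<lambda>x. scaleC c (a x)) \<in> A" using opA by (simp add: op_algebra_def)
lemma A_comp: "a \<in> A \<Longrightarrow> b \<in> A \<Longrightarrow> a \<circ> b \<in> A" using opA by (simp add: op_algebra_def)
lemma A_lim: "T \<in> BH \<Longrightarrow> (\<And>\<epsilon>. \<epsilon> > 0 \<Longrightarrow> \<exists>S\<in>A. opnorm (\<lambda>x. T x - S x) < \<epsilon>) \<Longrightarrow> T \<in> A"
  using opA unfolding op_algebra_def by blast
lemma dir: "directed_set le" using pL by (simp add: property_L_def left_cai_def)
lemma Nnb: "N \<noteq> bot" by (rule net_nontriv[OF dir])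
lemma eA: "e \<alpha> \<in> A" using pL by (simp add: property_L_def left_cai_def)
lemma en: "opnorm (e \<alpha>) \<le> 1" using pL by (simp add: property_L_def left_cai_def)
lemma eBH: "e \<alpha> \<in> BH" by (rule A_BH[OF eA])
lemma lcai: "a \<in> A \<Longrightarrow> ((\<lambda>\<alpha>. B (e \<alpha> \<circ> a)) \<longlongrightarrow> B a) N"
proof -
  assume a: "a \<in> A"
  hence "op_net_tendsto le (\<lambda>\<alpha>. e \<alpha> \<circ> a) a" using pL by (simp add: property_L_def left_cai_def)
  thus ?thesis using ont_B[of "\<lambda>\<alpha>. e \<alpha> \<circ> a" a le] a by (simp add: BH_comp eBH A_BH)
qed
lemma ee: "((\<lambda>\<alpha>. B (e \<alpha>' \<circ> e \<alpha>)) \<longlongrightarrow> B (e \<alpha>')) N"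
proof -
  have "op_net_tendsto le (\<lambda>\<alpha>. e \<alpha>' \<circ> e \<alpha>) (e \<alpha>')" using pL by (simp add: property_L_def)
  thus ?thesis using ont_B[of "\<lambda>\<alpha>. e \<alpha>' \<circ> e \<alpha>" "e \<alpha>'" le] by (simp add: BH_comp eBH)
qed
lemma L_iff: "x \<in> L \<longleftrightarrow> x \<in> A \<and> ((\<lambda>\<alpha>. B (x \<circ> e \<alpha>)) \<longlongrightarrow> B x) N"
proof -
  have "x \<in> A \<Longrightarrow> op_net_tendsto le (\<lambda>\<alpha>. x \<circ> e \<alpha>) x \<longleftrightarrow> ((\<lambda>\<alpha>. B (x \<circ> e \<alpha>)) \<longlongrightarrow> B x) N"
    by (rule ont_B) (simp_all add: BH_comp eBH A_BH)
  thus ?thesis unfolding LA_def by blast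
qed
lemma LA_sub: "x \<in> L \<Longrightarrow> x \<in> A" by (simp add: LA_def)
lemma L_BH: "x \<in> L \<Longrightarrow> x \<in> BH" by (simp add: LA_def A_BH)
lemma eL: "e \<alpha> \<in> L" using ee eA L_iff by blast
lemma Lrt: "x \<in> L \<Longrightarrow> ((\<lambda>\<alpha>. B (x \<circ> e \<alpha>)) \<longlongrightarrow> B x) N" using L_iff by blast

lemma AL: assumes a: "a \<in> A" and y: "y \<in> L" shows "a \<circ> y \<in> L"
proof -
  have yA: "y \<in> A" using y by (rule LA_sub)
  have "((\<lambda>\<alpha>. B a o\<^sub>L B (y \<circ> e \<alpha>)) \<longlongrightarrow> B a o\<^sub>L B y) N"
    by (rule bounded_bilinear.tendsto[OF bounded_bilinear_blinfun_compose tendsto_const Lrt[OF y]])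
  moreover have "B a o\<^sub>L B (y \<circ> e \<alpha>) = B (a \<circ> y \<circ> e \<alpha>)" for \<alpha>
    using a yA by (simp add: B_comp A_BH eBH BH_comp comp_assoc)
  moreover have "B a o\<^sub>L B y = B (a \<circ> y)" using a yA by (simp add: B_comp A_BH)
  ultimately show ?thesis using L_iff A_comp[OF a yA] by simp
qed

lemma L_add: assumes x: "x \<in> L" and y: "y \<in> L" shows "(\<lambda>z. x z + y z) \<in> L"
proof -
  have xA: "x \<in> A" and yA: "y \<in> A" using x y by (simp_all add: LA_sub)
  have "((\<lambda>\<alpha>. B (x \<circ> e \<alpha>) + B (y \<circ> e \<alpha>)) \<longlongrightarrow> B x + B y) N"
    by (intro tendsto_add Lrt x y)
  moreover have "B (x \<circ> e \<alpha>) + B (y \<circ> e \<alpha>) = B ((\<lambda>z. x z + y z) \<circ> e \<alpha>)" for \<alpha>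
  proof -
    have xe: "x \<circ> e \<alpha> \<in> BH" and ye: "y \<circ> e \<alpha> \<in> BH" using xA yA by (simp_all add: A_BH eBH BH_comp)
    have "B ((\<lambda>z. x z + y z) \<circ> e \<alpha>) = B (\<lambda>z. (x \<circ> e \<alpha>) z + (y \<circ> e \<alpha>) z)" by (simp add: o_def)
    also have "\<dots> = B (x \<circ> e \<alpha>) + B (y \<circ> e \<alpha>)" by (rule B_plus[OF xe ye])
    finally show ?thesis by simp
  qed
  moreover have "B x + B y = B (\<lambda>z. x z + y z)" using xA yA by (simp add: B_plus A_BH)
  ultimately show ?thesis using L_iff A_add[OF xA yA] by simp
qed

lemma L_sc: assumes x: "x \<in> L" shows "(\<lambda>z. scaleC c (x z)) \<in> L"
proof -
  have xA: "x \<in> A" using x by (simp add: LA_sub)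
  have xB: "x \<in> BH" by (rule A_BH[OF xA])
  have "((\<lambda>\<alpha>. B ((\<lambda>z. scaleC c (x z)) \<circ> e \<alpha>)) \<longlongrightarrow> B (\<lambda>z. scaleC c (x z))) N"
  proof (rule Btend_pt[OF Lrt[OF x], where c="cmod c"])
    fix \<alpha>
    have xe: "x \<circ> e \<alpha> \<in> BH" using xB eBH by (rule BH_comp)
    have "norm (B ((\<lambda>z. scaleC c (x z)) \<circ> e \<alpha>) - B (\<lambda>z. scaleC c (x z)))
          = opnorm (\<lambda>z. ((\<lambda>z. scaleC c (x z)) \<circ> e \<alpha>) z - scaleC c (x z))"
      by (rule opnorm_diff_B[symmetric]) (use xB xe BH_sc in \<open>simp_all add: o_def\<close>)
    also have "(\<lambda>z. ((\<lambda>z. scaleC c (x z)) \<circ> e \<alpha>) z - scaleC c (x z)) = (\<lambda>z. scaleC c ((\<lambda>z. (x \<circ> e \<alpha>) z - x z) z))"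
      by (simp add: scaleC_diff_right)
    also have "opnorm \<dots> \<le> cmod c * opnorm (\<lambda>z. (x \<circ> e \<alpha>) z - x z)"
      by (rule opnorm_scC[OF BH_minusf[OF xe xB]])
    also have "opnorm (\<lambda>z. (x \<circ> e \<alpha>) z - x z) = norm (B (x \<circ> e \<alpha>) - B x)"
      by (rule opnorm_diff_B[OF xe xB])
    finally show "norm (B ((\<lambda>z. scaleC c (x z)) \<circ> e \<alpha>) - B (\<lambda>z. scaleC c (x z))) \<le> norm (B (x \<circ> e \<alpha>) - B x) * cmod c"
      by (simp add: mult.commute o_def)
  qed
  thus ?thesis using L_iff A_sc[OF xA] by simp
qed


lemma A_closed: "closed (B ` A)"
proof (rule closed_sequential_limits[THEN iffD2], intro allI impI, elim conjE)
  fix Xs S assume Xs: "\<forall>n. Xs n \<in> B ` A" and lim: "Xs \<longlonglongrightarrow> S"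
  have "\<forall>n. \<exists>t. t \<in> A \<and> Xs n = B t" using Xs by blast
  hence "\<exists>T. \<forall>n. T n \<in> A \<and> Xs n = B (T n)" by (rule choice)
  then obtain T where T0: "\<forall>n. T n \<in> A \<and> Xs n = B (T n)" ..
  have T: "\<And>n. T n \<in> A" "\<And>n. Xs n = B (T n)" using T0 by simp_all
  define U where "U = blinfun_apply S"
  have pt: "(\<lambda>n. T n x) \<longlonglongrightarrow> U x" for x
  proof -
    have "(\<lambda>n. blinfun_apply (Xs n) x) \<longlonglongrightarrow> blinfun_apply S x"
      by (rule bounded_bilinear.tendsto[OF bounded_bilinear_blinfun_apply lim tendsto_const])
    thus ?thesis using T by (simp add: U_def B_apply A_BH)
  qed
  have UB: "U \<in> BH"
  proof (rule BH_I[where K="norm S"])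
    fix x y show "U (x + y) = U x + U y" by (simp add: U_def blinfun.add_right)
  next
    fix c x
    have "(\<lambda>n. T n (scaleC c x)) \<longlonglongrightarrow> U (scaleC c x)" by (rule pt)
    moreover have "(\<lambda>n. scaleC c (T n x)) \<longlonglongrightarrow> scaleC c (U x)"
      by (rule bounded_linear.tendsto[OF bounded_linear_scaleC pt])
    moreover have "T n (scaleC c x) = scaleC c (T n x)" for n using T(1) by (simp add: A_BH BH_scaleC)
    ultimately show "U (scaleC c x) = scaleC c (U x)" using LIMSEQ_unique by simp
  next
    fix x show "norm (U x) \<le> norm S * norm x" unfolding U_def by (rule norm_blinfun)
  qed
  have BU: "B U = S" by (simp add: B_def U_def blinfun_apply_inverse)
  have "U \<in> A"
  proof (rule A_lim[OF UB])
    fix \<epsilon> :: real assume "\<epsilon> > 0"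
    hence "\<forall>\<^sub>F n in sequentially. dist (Xs n) S < \<epsilon>" using lim by (rule tendstoD[rotated])
    then obtain n where "dist (Xs n) S < \<epsilon>" using eventually_happens trivial_limit_sequentially by blast
    hence "opnorm (\<lambda>x. U x - T n x) < \<epsilon>" using T UB
      by (simp add: opnorm_diff_B A_BH BU dist_norm norm_minus_commute)
    thus "\<exists>S\<in>A. opnorm (\<lambda>x. U x - S x) < \<epsilon>" using T(1) by blast
  qed
  thus "S \<in> B ` A" using BU by blast
qed

lemma norm_Be: "norm (B (e \<alpha>)) \<le> 1" using en by (simp add: B_norm eBH)

lemma L_closed: "closed (B ` L)"
proof (rule closed_sequential_limits[THEN iffD2], intro allI impI, elim conjE)
  fix Xs S assume Xs: "\<forall>n. Xs n \<in> B ` L" and lim: "Xs \<longlonglongrightarrow> S"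
  have "\<forall>n. \<exists>t. t \<in> L \<and> Xs n = B t" using Xs by blast
  hence "\<exists>T. \<forall>n. T n \<in> L \<and> Xs n = B (T n)" by (rule choice)
  then obtain T where T0: "\<forall>n. T n \<in> L \<and> Xs n = B (T n)" ..
  have T: "\<And>n. T n \<in> L" "\<And>n. Xs n = B (T n)" using T0 by simp_all
  have "\<forall>n. Xs n \<in> B ` A" using T LA_sub by blast
  hence "S \<in> B ` A" using closed_sequential_limits[THEN iffD1, OF A_closed, rule_format, of Xs S] lim by simp
  then obtain U where U: "U \<in> A" "S = B U" by blast
  have UB: "U \<in> BH" by (rule A_BH[OF U(1)])
  have "((\<lambda>\<alpha>. B (U \<circ> e \<alpha>)) \<longlongrightarrow> B U) N"
  proof (rule tendstoI)
    fix \<epsilon> :: real assume ep: "\<epsilon> > 0"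
    hence "\<forall>\<^sub>F n in sequentially. dist (Xs n) S < \<epsilon>/3" using lim by (intro tendstoD) auto
    then obtain n where n: "dist (Xs n) S < \<epsilon>/3" using eventually_happens trivial_limit_sequentially by blast
    have TnB: "T n \<in> BH" using T(1) by (rule L_BH)
    have "\<forall>\<^sub>F \<alpha> in N. dist (B (T n \<circ> e \<alpha>)) (B (T n)) < \<epsilon>/3"
      using Lrt[OF T(1)] ep by (intro tendstoD) auto
    thus "\<forall>\<^sub>F \<alpha> in N. dist (B (U \<circ> e \<alpha>)) (B U) < \<epsilon>"
    proof eventually_elim
      case (elim \<alpha>)
      have "B (U \<circ> e \<alpha>) - B (T n \<circ> e \<alpha>) = (B U - B (T n)) o\<^sub>L B (e \<alpha>)"
        using UB TnB eBH by (simp add: B_comp bounded_bilinear.diff_left[OF bounded_bilinear_blinfun_compose])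
      hence "norm (B (U \<circ> e \<alpha>) - B (T n \<circ> e \<alpha>)) \<le> norm (B U - B (T n)) * norm (B (e \<alpha>))"
        using norm_blinfun_compose by metis
      also have "\<dots> \<le> norm (B U - B (T n)) * 1" by (rule mult_left_mono[OF norm_Be]) simp
      finally have d1: "norm (B (U \<circ> e \<alpha>) - B (T n \<circ> e \<alpha>)) < \<epsilon>/3"
        using n T(2) U(2) by (simp add: dist_norm norm_minus_commute)
      have "dist (B (U \<circ> e \<alpha>)) (B U) \<le> dist (B (U \<circ> e \<alpha>)) (B (T n \<circ> e \<alpha>)) + dist (B (T n \<circ> e \<alpha>)) (B (T n)) + dist (B (T n)) (B U)"
        using dist_triangle[of "B (U \<circ> e \<alpha>)" "B U" "B (T n \<circ> e \<alpha>)"] dist_triangle[of "B (T n \<circ> e \<alpha>)" "B U" "B (T n)"]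
        by linarith
      thus ?case using d1 elim n T(2) U(2) by (simp add: dist_norm norm_minus_commute)
    qed
  qed
  hence "U \<in> L" using L_iff U(1) by blast
  thus "S \<in> B ` L" using U(2) by blast
qed


lemma BL_add: "u \<in> B ` L \<Longrightarrow> v \<in> B ` L \<Longrightarrow> u + v \<in> B ` L"
proof -
  assume "u \<in> B ` L" "v \<in> B ` L"
  then obtain x y where xy: "x \<in> L" "y \<in> L" "u = B x" "v = B y" by blast
  hence "u + v = B (\<lambda>z. x z + y z)" by (simp add: B_plus L_BH)
  thus ?thesis using L_add[OF xy(1,2)] by blast
qed
lemma BL_sc: "u \<in> B ` L \<Longrightarrow> r *\<^sub>R u \<in> B ` L"
proof -
  assume "u \<in> B ` L"
  then obtain x where x: "x \<in> L" "u = B x" by blast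
  hence "r *\<^sub>R u = B (\<lambda>z. scaleC (complex_of_real r) (x z))" by (simp add: B_scaleR L_BH)
  thus ?thesis using L_sc[OF x(1)] by blast
qed
lemma BA_add: "u \<in> B ` A \<Longrightarrow> v \<in> B ` A \<Longrightarrow> u + v \<in> B ` A"
proof -
  assume "u \<in> B ` A" "v \<in> B ` A"
  then obtain x y where xy: "x \<in> A" "y \<in> A" "u = B x" "v = B y" by blast
  hence "u + v = B (\<lambda>z. x z + y z)" by (simp add: B_plus A_BH)
  thus ?thesis using A_add[OF xy(1,2)] by blast
qed
lemma BA_sc: "u \<in> B ` A \<Longrightarrow> r *\<^sub>R u \<in> B ` A"
proof -
  assume "u \<in> B ` A"
  then obtain x where x: "x \<in> A" "u = B x" by blast
  hence "r *\<^sub>R u = B (\<lambda>z. scaleC (complex_of_real r) (x z))" by (simp add: B_scaleR A_BH)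
  thus ?thesis using A_sc[OF x(1)] by blast
qed
lemma BL_mul: "u \<in> B ` L \<Longrightarrow> v \<in> B ` L \<Longrightarrow> u o\<^sub>L v \<in> B ` L"
proof -
  assume "u \<in> B ` L" "v \<in> B ` L"
  then obtain x y where xy: "x \<in> L" "y \<in> L" "u = B x" "v = B y" by blast
  hence "u o\<^sub>L v = B (x \<circ> y)" by (simp add: B_comp L_BH)
  thus ?thesis using AL[OF LA_sub[OF xy(1)] xy(2)] by blast
qed
lemma BLA_mul: "u \<in> B ` L \<Longrightarrow> v \<in> B ` A \<Longrightarrow> u o\<^sub>L v \<in> B ` A"
proof -
  assume "u \<in> B ` L" "v \<in> B ` A"
  then obtain x y where xy: "x \<in> L" "y \<in> A" "u = B x" "v = B y" by blast
  hence "u o\<^sub>L v = B (x \<circ> y)" by (simp add: B_comp L_BH A_BH)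
  thus ?thesis using A_comp[OF LA_sub[OF xy(1)] xy(2)] by blast
qed
lemma BeL: "B (e \<alpha>) \<in> B ` L" using eL by blast

lemma factor_left: assumes a: "a \<in> A" shows "\<exists>l\<in>L. \<exists>b\<in>A. a = l \<circ> b"
proof -
  have "\<exists>l\<in>B ` L. \<exists>y\<in>B ` A. B a = l o\<^sub>L y"
  proof (rule cohen_factor[where mul="(o\<^sub>L)" and L="B ` L" and X="B ` A" and F=N and e="\<lambda>\<alpha>. B (e \<alpha>)"])
    show "bounded_bilinear (o\<^sub>L)" by (rule bounded_bilinear_blinfun_compose)
    show "\<And>a b. norm (a o\<^sub>L b) \<le> norm a * norm b" by (rule norm_blinfun_compose)
    show "\<And>a b y. (a o\<^sub>L b) o\<^sub>L y = a o\<^sub>L (b o\<^sub>L y)" by (rule blinfun_comp_assoc)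
    show "closed (B ` L)" by (rule L_closed)
    show "closed (B ` A)" by (rule A_closed)
    show "N \<noteq> bot" by (rule Nnb)
    show "B a \<in> B ` A" using a by blast
    show "\<And>\<alpha>. B (e \<alpha>) \<in> B ` L" by (rule BeL)
    show "\<And>\<alpha>. norm (B (e \<alpha>)) \<le> 1" by (rule norm_Be)
    show "((\<lambda>\<alpha>. B (e \<alpha>) o\<^sub>L y) \<longlongrightarrow> y) N" if "y \<in> B ` A" for y
    proof -
      obtain b where b: "b \<in> A" "y = B b" using \<open>y \<in> B ` A\<close> by blast
      have "B (e \<alpha>) o\<^sub>L y = B (e \<alpha> \<circ> b)" for \<alpha> using b by (simp add: B_comp eBH A_BH)
      thus ?thesis using lcai[OF b(1)] b(2) by simp
    qed
    show "((\<lambda>\<alpha>. s o\<^sub>L B (e \<alpha>)) \<longlongrightarrow> s) N" if "s \<in> B ` L" for s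
    proof -
      obtain x where x: "x \<in> L" "s = B x" using \<open>s \<in> B ` L\<close> by blast
      have "s o\<^sub>L B (e \<alpha>) = B (x \<circ> e \<alpha>)" for \<alpha> using x by (simp add: B_comp eBH L_BH)
      thus ?thesis using Lrt[OF x(1)] x(2) by simp
    qed
  qed (auto intro: BL_add BL_sc BA_add BA_sc BL_mul BLA_mul)
  then obtain l y where ly: "l \<in> L" "y \<in> A" "B a = B l o\<^sub>L B y" by blast
  hence "B a = B (l \<circ> y)" by (simp add: B_comp L_BH A_BH)
  hence "a = l \<circ> y" using a ly by (intro B_inj) (simp_all add: A_BH L_BH BH_comp)
  thus ?thesis using ly by blast
qed

lemma factor_right: assumes x: "x \<in> L" shows "\<exists>y\<in>L. \<exists>l\<in>L. x = y \<circ> l"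
proof -
  have "\<exists>l\<in>B ` L. \<exists>y\<in>B ` L. B x = (\<lambda>a b. b o\<^sub>L a) l y"
  proof (rule cohen_factor[where mul="\<lambda>a b. b o\<^sub>L a" and L="B ` L" and X="B ` L" and F=N and e="\<lambda>\<alpha>. B (e \<alpha>)"])
    show "bounded_bilinear (\<lambda>a b. b o\<^sub>L a)" by (rule bounded_bilinear.flip[OF bounded_bilinear_blinfun_compose])
    show "\<And>a b. norm (b o\<^sub>L a) \<le> norm a * norm b" by (metis norm_blinfun_compose mult.commute)
    show "\<And>a b y. y o\<^sub>L (b o\<^sub>L a) = (y o\<^sub>L b) o\<^sub>L a" by (simp add: blinfun_comp_assoc)
    show "closed (B ` L)" by (rule L_closed)
    show "N \<noteq> bot" by (rule Nnb)
    show "B x \<in> B ` L" using x by blast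
    show "\<And>\<alpha>. B (e \<alpha>) \<in> B ` L" by (rule BeL)
    show "\<And>\<alpha>. norm (B (e \<alpha>)) \<le> 1" by (rule norm_Be)
    show "((\<lambda>\<alpha>. y o\<^sub>L B (e \<alpha>)) \<longlongrightarrow> y) N" if "y \<in> B ` L" for y
    proof -
      obtain z where z: "z \<in> L" "y = B z" using \<open>y \<in> B ` L\<close> by blast
      have "y o\<^sub>L B (e \<alpha>) = B (z \<circ> e \<alpha>)" for \<alpha> using z by (simp add: B_comp eBH L_BH)
      thus ?thesis using Lrt[OF z(1)] z(2) by simp
    qed
    show "((\<lambda>\<alpha>. B (e \<alpha>) o\<^sub>L s) \<longlongrightarrow> s) N" if "s \<in> B ` L" for s
    proof -
      obtain z where z: "z \<in> L" "s = B z" using \<open>s \<in> B ` L\<close> by blast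
      have "B (e \<alpha>) o\<^sub>L s = B (e \<alpha> \<circ> z)" for \<alpha> using z by (simp add: B_comp eBH L_BH)
      thus ?thesis using lcai[OF LA_sub[OF z(1)]] z(2) by simp
    qed
  qed (auto intro: BL_add BL_sc BL_mul L_closed)
  then obtain l y where ly: "l \<in> L" "y \<in> L" "B x = B y o\<^sub>L B l" by blast
  hence "B x = B (y \<circ> l)" by (simp add: B_comp L_BH)
  hence "x = y \<circ> l" using x ly by (intro B_inj) (simp_all add: L_BH BH_comp)
  thus ?thesis using ly by blast
qed

end

lemma cs_I: "(\<forall>k<(m::nat). v k \<in> S) \<Longrightarrow> (\<Sum>k<m. scaleC (c k) (v k)) \<in> c_span S"
  unfolding c_span_def by blast
lemma cs_E: "x \<in> c_span S \<Longrightarrow> (\<And>(m::nat) c v. x = (\<Sum>k<m. scaleC (c k) (v k)) \<Longrightarrow> \<forall>k<m. v k \<in> S \<Longrightarrow> P) \<Longrightarrow> P"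
  unfolding c_span_def by blast

lemma cs_sub: "S \<subseteq> c_span S"
proof
  fix s assume "s \<in> S"
  hence "(\<Sum>k<(1::nat). scaleC ((\<lambda>_. 1) k) ((\<lambda>_. s) k)) \<in> c_span S" by (intro cs_I) simp
  thus "s \<in> c_span S" by (simp add: scaleC_one)
qed

lemma cs_0: "0 \<in> c_span S"
proof -
  have "(\<Sum>k<(0::nat). scaleC ((\<lambda>_. 1) k) ((\<lambda>_. 0) k)) \<in> c_span S" by (intro cs_I) simp
  thus ?thesis by simp
qed

lemma cs_mono: "S \<subseteq> T \<Longrightarrow> c_span S \<subseteq> c_span T"
proof
  fix x assume ST: "S \<subseteq> T" and "x \<in> c_span S"
  then obtain m :: nat and c v where "x = (\<Sum>k<m. scaleC (c k) (v k))" "\<forall>k<m. v k \<in> S" by (elim cs_E)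
  thus "x \<in> c_span T" using ST cs_I[of m v T c] by blast
qed

lemma cs_add1:
  assumes x: "x \<in> c_span S" and v: "v \<in> S"
  shows "x + scaleC c v \<in> c_span S"
proof -
  obtain m :: nat and cc vv where x': "x = (\<Sum>k<m. scaleC (cc k) (vv k))" "\<forall>k<m. vv k \<in> S"
    using x by (elim cs_E)
  have "x + scaleC c v = (\<Sum>k<Suc m. scaleC ((cc(m := c)) k) ((vv(m := v)) k))"
    unfolding sum.lessThan_Suc x'(1) by (intro arg_cong2[where f="(+)"] sum.cong) auto
  moreover have "\<forall>k<Suc m. (vv(m := v)) k \<in> S" using x'(2) v by (auto simp: less_Suc_eq)
  ultimately show ?thesis using cs_I by metis
qed

lemma cs_add:
  assumes x: "x \<in> c_span S" and y: "y \<in> c_span S"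
  shows "x + y \<in> c_span S"
proof -
  obtain m :: nat and cc vv where y': "y = (\<Sum>k<m. scaleC (cc k) (vv k))" "\<forall>k<m. vv k \<in> S"
    using y by (elim cs_E)
  have "x + (\<Sum>k<n. scaleC (cc k) (vv k)) \<in> c_span S" if "n \<le> m" for n
    using that
  proof (induction n)
    case 0 thus ?case using x by simp
  next
    case (Suc n)
    hence "x + (\<Sum>k<n. scaleC (cc k) (vv k)) + scaleC (cc n) (vv n) \<in> c_span S"
      using y'(2) by (intro cs_add1) auto
    thus ?case by (simp add: add.assoc)
  qed
  thus ?thesis using y'(1) by simp
qed

lemma cs_sc:
  assumes x: "x \<in> c_span S" shows "scaleC c x \<in> c_span S"
proof -
  obtain m :: nat and cc vv where x': "x = (\<Sum>k<m. scaleC (cc k) (vv k))" "\<forall>k<m. vv k \<in> S"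
    using x by (elim cs_E)
  have "scaleC c x = (\<Sum>k<m. scaleC ((\<lambda>k. c * cc k) k) (vv k))"
    unfolding x'(1) scaleC_sum by (simp add: scaleC_scaleC)
  thus ?thesis using cs_I[of m vv S "\<lambda>k. c * cc k"] x'(2) by simp
qed

lemma cs_least:
  assumes W0: "0 \<in> W" and Wadd: "\<And>x y. x \<in> W \<Longrightarrow> y \<in> W \<Longrightarrow> x + y \<in> W"
    and Wsc: "\<And>c x. x \<in> W \<Longrightarrow> scaleC c x \<in> W" and SW: "S \<subseteq> W"
  shows "c_span S \<subseteq> W"
proof
  fix x assume "x \<in> c_span S"
  then obtain m :: nat and cc vv where x': "x = (\<Sum>k<m. scaleC (cc k) (vv k))" "\<forall>k<m. vv k \<in> S"
    by (elim cs_E)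
  have "(\<Sum>k<n. scaleC (cc k) (vv k)) \<in> W" if "n \<le> m" for n
    using that
  proof (induction n)
    case 0 thus ?case using W0 by simp
  next
    case (Suc n)
    hence "(\<Sum>k<n. scaleC (cc k) (vv k)) \<in> W" by simp
    moreover have "vv n \<in> W" using x'(2) SW Suc.prems by auto
    ultimately show ?case by (simp add: Wadd Wsc)
  qed
  thus "x \<in> W" using x'(1) by simp
qed

lemma cl_add:
  assumes x: "x \<in> closure (c_span S)" and y: "y \<in> closure (c_span S)"
  shows "x + y \<in> closure (c_span S)"
proof -
  obtain xs where xs: "\<forall>n. xs n \<in> c_span S" "xs \<longlonglongrightarrow> x" using x unfolding closure_sequential by (elim exE conjE)
  obtain ys where ys: "\<forall>n. ys n \<in> c_span S" "ys \<longlonglongrightarrow> y" using y unfolding closure_sequential by (elim exE conjE)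
  have "\<forall>n. xs n + ys n \<in> c_span S" using xs(1) ys(1) by (simp add: cs_add)
  moreover have "(\<lambda>n. xs n + ys n) \<longlonglongrightarrow> x + y" using xs(2) ys(2) by (rule tendsto_add)
  ultimately show ?thesis unfolding closure_sequential by (intro exI conjI)
qed

lemma cl_sc:
  assumes x: "x \<in> closure (c_span S)"
  shows "scaleC c x \<in> closure (c_span S)"
proof -
  obtain xs where xs: "\<forall>n. xs n \<in> c_span S" "xs \<longlonglongrightarrow> x" using x unfolding closure_sequential by (elim exE conjE)
  have "\<forall>n. scaleC c (xs n) \<in> c_span S" using xs(1) by (simp add: cs_sc)
  moreover have "(\<lambda>n. scaleC c (xs n)) \<longlonglongrightarrow> scaleC c x"
    by (rule bounded_linear.tendsto[OF bounded_linear_scaleC xs(2)])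
  ultimately show ?thesis unfolding closure_sequential by (intro exI conjI)
qed

lemma cl_0: "0 \<in> closure (c_span S)" using cs_0 closure_subset by blast

lemma cl_least:
  assumes "closed W" "0 \<in> W" "\<And>x y. x \<in> W \<Longrightarrow> y \<in> W \<Longrightarrow> x + y \<in> W"
    "\<And>c x. x \<in> W \<Longrightarrow> scaleC c x \<in> W" "S \<subseteq> W"
  shows "closure (c_span S) \<subseteq> W"
  using closure_minimal[OF cs_least[OF assms(2-5)] assms(1)] .

lemma cc_mono:
  assumes ST: "S \<subseteq> T" and h: "cc_hom T \<pi>" shows "cc_hom S \<pi>"
proof -
  have h1: "\<forall>a\<in>T. \<pi> a \<in> BH"
    and h2: "\<forall>a\<in>T. \<forall>b\<in>T. \<pi> (\<lambda>x. a x + b x) = (\<lambda>y. \<pi> a y + \<pi> b y)"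
    and h3: "\<forall>c. \<forall>a\<in>T. \<pi> (\<lambda>x. scaleC c (a x)) = (\<lambda>y. scaleC c (\<pi> a y))"
    and h4: "\<forall>a\<in>T. \<forall>b\<in>T. \<pi> (a \<circ> b) = \<pi> a \<circ> \<pi> b"
    and h5: "\<forall>n\<ge>1. \<forall>a. (\<forall>i<n. \<forall>j<n. a i j \<in> T) \<longrightarrow> matnorm n (\<lambda>i j. \<pi> (a i j)) \<le> matnorm n a"
    using h[unfolded cc_hom_def] by (auto dest: conjunct1 conjunct2)
  have "\<forall>n\<ge>1. \<forall>a. (\<forall>i<n. \<forall>j<n. a i j \<in> S) \<longrightarrow> matnorm n (\<lambda>i j. \<pi> (a i j)) \<le> matnorm n a"
  proof (intro allI impI)
    fix n :: nat and a assume "n \<ge> 1" "\<forall>i<n. \<forall>j<n. a i j \<in> S"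
    hence "\<forall>i<n. \<forall>j<n. a i j \<in> T" using ST by blast
    thus "matnorm n (\<lambda>i j. \<pi> (a i j)) \<le> matnorm n a" using h5 \<open>n \<ge> 1\<close> by blast
  qed
  moreover have "\<forall>a\<in>S. \<pi> a \<in> BH" using h1 ST by blast
  moreover have "\<forall>a\<in>S. \<forall>b\<in>S. \<pi> (\<lambda>x. a x + b x) = (\<lambda>y. \<pi> a y + \<pi> b y)" using h2 ST by blast
  moreover have "\<forall>c. \<forall>a\<in>S. \<pi> (\<lambda>x. scaleC c (a x)) = (\<lambda>y. scaleC c (\<pi> a y))" using h3 ST by blast
  moreover have "\<forall>a\<in>S. \<forall>b\<in>S. \<pi> (a \<circ> b) = \<pi> a \<circ> \<pi> b" using h4 ST by blast
  ultimately show ?thesis unfolding cc_hom_def by blast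
qed

context PL begin

lemma part3:
  assumes h: "cc_hom A \<pi>"
  shows "{T \<in> BH. \<forall>a\<in>A. T \<circ> \<pi> a \<in> \<pi> ` A} = {T \<in> BH. \<forall>a\<in>L. T \<circ> \<pi> a \<in> \<pi> ` L}"
proof (intro equalityI subsetI)
  fix T assume "T \<in> {T \<in> BH. \<forall>a\<in>A. T \<circ> \<pi> a \<in> \<pi> ` A}"
  hence T: "T \<in> BH" "\<And>a. a \<in> A \<Longrightarrow> T \<circ> \<pi> a \<in> \<pi> ` A" by auto
  have "T \<circ> \<pi> x \<in> \<pi> ` L" if x: "x \<in> L" for x
  proof -
    obtain y l where yl: "y \<in> L" "l \<in> L" "x = y \<circ> l" using factor_right[OF x] by blast
    have yA: "y \<in> A" and lA: "l \<in> A" using yl LA_sub by auto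
    obtain a' where a': "a' \<in> A" "T \<circ> \<pi> y = \<pi> a'" using T(2)[OF yA] by blast
    have "T \<circ> \<pi> x = (T \<circ> \<pi> y) \<circ> \<pi> l" using cc_mult[OF h yA lA] yl(3) by (simp add: comp_assoc)
    also have "\<dots> = \<pi> (a' \<circ> l)" using cc_mult[OF h a'(1) lA] a'(2) by simp
    finally show ?thesis using AL[OF a'(1) yl(2)] by blast
  qed
  thus "T \<in> {T \<in> BH. \<forall>a\<in>L. T \<circ> \<pi> a \<in> \<pi> ` L}" using T(1) by blast
next
  fix T assume "T \<in> {T \<in> BH. \<forall>a\<in>L. T \<circ> \<pi> a \<in> \<pi> ` L}"
  hence T: "T \<in> BH" "\<And>a. a \<in> L \<Longrightarrow> T \<circ> \<pi> a \<in> \<pi> ` L" by auto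
  have "T \<circ> \<pi> a \<in> \<pi> ` A" if a: "a \<in> A" for a
  proof -
    obtain l b where lb: "l \<in> L" "b \<in> A" "a = l \<circ> b" using factor_left[OF a] by blast
    have lA: "l \<in> A" using lb LA_sub by auto
    obtain l' where l': "l' \<in> L" "T \<circ> \<pi> l = \<pi> l'" using T(2)[OF lb(1)] by blast
    have l'A: "l' \<in> A" using l' LA_sub by auto
    have "T \<circ> \<pi> a = (T \<circ> \<pi> l) \<circ> \<pi> b" using cc_mult[OF h lA lb(2)] lb(3) by (simp add: comp_assoc)
    also have "\<dots> = \<pi> (l' \<circ> b)" using cc_mult[OF h l'A lb(2)] l'(2) by simp
    finally show ?thesis using A_comp[OF l'A lb(2)] by blast
  qed
  thus "T \<in> {T \<in> BH. \<forall>a\<in>A. T \<circ> \<pi> a \<in> \<pi> ` A}" using T(1) by blast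
qed

lemma A_lip: "cc_hom A \<pi> \<Longrightarrow> a \<in> A \<Longrightarrow> b \<in> A \<Longrightarrow> norm (\<pi> a \<xi> - \<pi> b \<xi>) \<le> norm (B a - B b) * norm \<xi>"
proof -
  assume h: "cc_hom A \<pi>" and a: "a \<in> A" and b: "b \<in> A"
  have AB: "A \<subseteq> BH" using A_BH by blast
  show ?thesis by (rule cc_lip[OF h a b AB A_sc A_add])
qed

lemma part1:
  assumes h: "cc_hom A \<pi>"
  shows "cc_hom L \<pi> \<and> (nondegenerate A \<pi> \<longrightarrow> nondegenerate L \<pi>)"
proof (intro conjI impI)
  have LsA: "L \<subseteq> A" using LA_sub by blast
  show "cc_hom L \<pi>" by (rule cc_mono[OF LsA h])
  assume nd: "nondegenerate A \<pi>"
  define W where "W = closure (c_span {\<pi> a \<xi> | a \<xi>. a \<in> L})"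
  have KA: "{\<pi> a \<xi> | a \<xi>. a \<in> A} \<subseteq> W"
  proof
    fix z assume "z \<in> {\<pi> a \<xi> | a \<xi>. a \<in> A}"
    then obtain a \<xi> where a: "a \<in> A" "z = \<pi> a \<xi>" by blast
    have lim: "((\<lambda>\<alpha>. \<pi> (e \<alpha> \<circ> a) \<xi>) \<longlongrightarrow> \<pi> a \<xi>) N"
    proof (rule Btend_pt[OF lcai[OF a(1)], where c="norm \<xi>"])
      fix \<alpha>
      show "norm (\<pi> (e \<alpha> \<circ> a) \<xi> - \<pi> a \<xi>) \<le> norm (B (e \<alpha> \<circ> a) - B a) * norm \<xi>"
        by (rule A_lip[OF h A_comp[OF eA a(1)] a(1)])
    qed
    have "\<pi> (e \<alpha> \<circ> a) \<xi> \<in> W" for \<alpha>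
    proof -
      have "\<pi> (e \<alpha> \<circ> a) \<xi> = \<pi> (e \<alpha>) (\<pi> a \<xi>)" using cc_mult[OF h eA a(1)] by simp
      hence "\<pi> (e \<alpha> \<circ> a) \<xi> \<in> {\<pi> a \<xi> | a \<xi>. a \<in> L}" using eL[of \<alpha>] by (intro CollectI exI conjI)
      hence "\<pi> (e \<alpha> \<circ> a) \<xi> \<in> c_span {\<pi> a \<xi> | a \<xi>. a \<in> L}" using cs_sub by (rule subsetD[rotated])
      thus ?thesis unfolding W_def using closure_subset by (rule subsetD[rotated])
    qed
    hence "\<forall>\<^sub>F \<alpha> in N. \<pi> (e \<alpha> \<circ> a) \<xi> \<in> W" by simp
    hence "\<pi> a \<xi> \<in> W" using Lim_in_closed_set[OF _ _ Nnb lim] unfolding W_def by simp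
    thus "z \<in> W" using a by simp
  qed
  have "closure (c_span {\<pi> a \<xi> | a \<xi>. a \<in> A}) \<subseteq> W"
    by (rule cl_least[OF _ _ _ _ KA]) (auto simp: W_def intro: cl_0 cl_add cl_sc)
  hence "UNIV \<subseteq> W" using nd unfolding nondegenerate_def by simp
  hence "W = UNIV" by (rule top_le)
  thus "nondegenerate L \<pi>" unfolding nondegenerate_def W_def .
qed

end

lemma parallelogram:
  fixes x y :: "'b::chilbert"
  shows "(norm (x - y))^2 = 2 * (norm x)^2 + 2 * (norm y)^2 - (norm (x + y))^2"
proof -
  have "(norm (x + - y))^2 = (norm x)^2 + (norm (- y))^2 + 2 * Re (cinner x (- y))" by (rule norm_add_sq)
  moreover have "(norm (x + y))^2 = (norm x)^2 + (norm y)^2 + 2 * Re (cinner x y)" by (rule norm_add_sq)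
  ultimately show ?thesis by (simp add: cinner_minus_right)
qed

lemma norm_sub_sq:
  fixes r v :: "'b::chilbert"
  shows "(norm (r - scaleC c v))^2 = (norm r)^2 + (cmod c)^2 * (norm v)^2 - 2 * Re (c * cinner r v)"
proof -
  have "(norm (r + - scaleC c v))^2 = (norm r)^2 + (norm (- scaleC c v))^2 + 2 * Re (cinner r (- scaleC c v))"
    by (rule norm_add_sq)
  thus ?thesis by (simp add: cinner_minus_right cinner_scaleC_right norm_scaleC power_mult_distrib)
qed

lemma projection:
  fixes \<xi> :: "'b::chilbert"
  shows "\<exists>k\<in>closure (c_span S). \<forall>v\<in>closure (c_span S). cinner v (\<xi> - k) = 0"
proof -
  define W where "W = closure (c_span S)"
  have W0: "0 \<in> W" unfolding W_def by (rule cl_0)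
  have Wadd: "x + y \<in> W" if "x \<in> W" "y \<in> W" for x y using that unfolding W_def by (rule cl_add)
  have Wsc: "scaleC c x \<in> W" if "x \<in> W" for c x using that unfolding W_def by (rule cl_sc)
  have Wc: "closed W" unfolding W_def by simp
  define d where "d = Inf ((\<lambda>w. norm (\<xi> - w)) ` W)"
  have bdd: "bdd_below ((\<lambda>w. norm (\<xi> - w)) ` W)" by (rule bdd_belowI[of _ 0]) auto
  have dle: "d \<le> norm (\<xi> - w)" if "w \<in> W" for w
    unfolding d_def by (rule cInf_lower[OF _ bdd]) (use that in simp)
  have d0: "0 \<le> d" unfolding d_def by (rule cInf_greatest) (use W0 in auto)
  have "\<exists>w\<in>W. (norm (\<xi> - w))^2 < d^2 + inverse (real (Suc n))" for n
  proof -
    have pos: "0 < inverse (real (Suc n))" by simp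
    have "d = sqrt (d^2)" using d0 by simp
    also have "\<dots> < sqrt (d^2 + inverse (real (Suc n)))" using pos by (intro real_sqrt_less_mono) simp
    finally have "d < sqrt (d^2 + inverse (real (Suc n)))" .
    hence "Inf ((\<lambda>w. norm (\<xi> - w)) ` W) < sqrt (d^2 + inverse (real (Suc n)))" unfolding d_def .
    then obtain z where "z \<in> (\<lambda>w. norm (\<xi> - w)) ` W" "z < sqrt (d^2 + inverse (real (Suc n)))"
      using cInf_lessD[of "(\<lambda>w. norm (\<xi> - w)) ` W"] W0 by blast
    then obtain w where w: "w \<in> W" "norm (\<xi> - w) < sqrt (d^2 + inverse (real (Suc n)))" by blast
    have "(norm (\<xi> - w))^2 < (sqrt (d^2 + inverse (real (Suc n))))^2"
      by (rule power_strict_mono[OF w(2)]) auto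
    also have "\<dots> = d^2 + inverse (real (Suc n))" using pos by (intro real_sqrt_pow2) simp
    finally show ?thesis using w(1) by blast
  qed
  hence "\<forall>n. \<exists>w. w \<in> W \<and> (norm (\<xi> - w))^2 < d^2 + inverse (real (Suc n))" by blast
  hence "\<exists>ws. \<forall>n. ws n \<in> W \<and> (norm (\<xi> - ws n))^2 < d^2 + inverse (real (Suc n))" by (rule choice)
  then obtain ws where ws0: "\<forall>n. ws n \<in> W \<and> (norm (\<xi> - ws n))^2 < d^2 + inverse (real (Suc n))" ..
  have wsW: "ws n \<in> W" and wsd: "(norm (\<xi> - ws n))^2 < d^2 + inverse (real (Suc n))" for n
    using ws0 by simp_all
  have cd: "(norm (ws n - ws m))^2 \<le> 2 * inverse (real (Suc m)) + 2 * inverse (real (Suc n))" for n m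
  proof -
    define mid where "mid = scaleC (complex_of_real (1/2)) (ws n + ws m)"
    have midW: "mid \<in> W" unfolding mid_def by (intro Wsc Wadd wsW)
    have "(\<xi> - ws m) + (\<xi> - ws n) = 2 *\<^sub>R (\<xi> - mid)"
      unfolding mid_def scaleC_of_real by (simp add: algebra_simps scaleR_2)
    hence "norm ((\<xi> - ws m) + (\<xi> - ws n)) = 2 * norm (\<xi> - mid)" by simp
    hence "(norm ((\<xi> - ws m) + (\<xi> - ws n)))^2 \<ge> 4 * d^2"
      using dle[OF midW] d0 by (simp add: power_mult_distrib power_mono)
    moreover have "ws n - ws m = (\<xi> - ws m) - (\<xi> - ws n)" by simp
    ultimately show ?thesis using parallelogram[of "\<xi> - ws m" "\<xi> - ws n"] wsd[of n] wsd[of m]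
      by simp
  qed
  have "Cauchy ws"
  proof (rule CauchyI)
    fix \<epsilon> :: real assume ep: "0 < \<epsilon>"
    obtain M :: nat where M: "4 / \<epsilon>^2 < real M" using reals_Archimedean2 by blast
    have "\<forall>m\<ge>M. \<forall>n\<ge>M. norm (ws m - ws n) < \<epsilon>"
    proof (intro allI impI)
      fix m n assume mn: "M \<le> m" "M \<le> n"
      have i1: "inverse (real (Suc n)) \<le> inverse (real (Suc M))" using mn by (intro le_imp_inverse_le) auto
      have i2: "inverse (real (Suc m)) \<le> inverse (real (Suc M))" using mn by (intro le_imp_inverse_le) auto
      have "(norm (ws m - ws n))^2 \<le> 4 * inverse (real (Suc M))" using cd[of m n] i1 i2 by linarith
      also have "\<dots> < \<epsilon>^2"
      proof -
        have "4 / \<epsilon>^2 < real (Suc M)" using M by simp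
        hence "4 < \<epsilon>^2 * real (Suc M)" using ep by (simp add: field_simps)
        thus ?thesis using ep by (simp add: field_simps)
      qed
      finally show "norm (ws m - ws n) < \<epsilon>" using ep by (simp add: power_less_imp_less_base)
    qed
    thus "\<exists>M. \<forall>m\<ge>M. \<forall>n\<ge>M. norm (ws m - ws n) < \<epsilon>" by blast
  qed
  then obtain k where k: "ws \<longlonglongrightarrow> k" using Cauchy_convergent convergent_def by blast
  have kW: "k \<in> W" using closed_sequentially[OF Wc _ k] wsW by blast
  have "(norm (\<xi> - k))^2 \<le> d^2 + 0"
  proof (rule tendsto_le[OF trivial_limit_sequentially])
    show "(\<lambda>n. d^2 + inverse (real (Suc n))) \<longlonglongrightarrow> d^2 + 0"
      by (intro tendsto_add tendsto_const LIMSEQ_inverse_real_of_nat)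
    show "(\<lambda>n. (norm (\<xi> - ws n))^2) \<longlonglongrightarrow> (norm (\<xi> - k))^2"
      by (intro tendsto_intros k)
    show "\<forall>\<^sub>F n in sequentially. (norm (\<xi> - ws n))^2 \<le> d^2 + inverse (real (Suc n))"
      using wsd by (simp add: less_imp_le)
  qed
  hence rd: "norm (\<xi> - k) \<le> d" using d0 by (simp add: power2_le_iff_abs_le)
  have "cinner v (\<xi> - k) = 0" if vW: "v \<in> W" for v
  proof -
    define r where "r = \<xi> - k"
    define z where "z = cinner v r"
    define t :: real where "t = 1 / ((norm v)^2 + 1)"
    have vp: "0 < (norm v)^2 + 1" by (simp add: add_nonneg_pos)
    have t0: "0 < t" using vp by (simp add: t_def)
    have "k + scaleC (complex_of_real t * z) v \<in> W" by (intro Wadd Wsc kW vW)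
    hence "d \<le> norm (\<xi> - (k + scaleC (complex_of_real t * z) v))" by (rule dle)
    hence "norm r \<le> norm (r - scaleC (complex_of_real t * z) v)" using rd unfolding r_def by (simp add: algebra_simps)
    hence "(norm r)^2 \<le> (norm (r - scaleC (complex_of_real t * z) v))^2" by (simp add: power_mono)
    also have "\<dots> = (norm r)^2 + (t * cmod z)^2 * (norm v)^2 - 2 * Re (complex_of_real t * z * cinner r v)"
      using t0 by (simp add: norm_sub_sq norm_mult)
    also have "complex_of_real t * z * cinner r v = complex_of_real (t * (cmod z)^2)"
      unfolding z_def by (subst cinner_commute[of r v]) (simp add: complex_norm_square mult.assoc flip: of_real_power)
    finally have "2 * (t * (cmod z)^2) \<le> (t * cmod z)^2 * (norm v)^2" by simp
    hence "2 * (cmod z)^2 \<le> t * (cmod z)^2 * (norm v)^2" using t0 by (simp add: power2_eq_square field_simps)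
    moreover have "t * (norm v)^2 \<le> 1" unfolding t_def using vp by (simp add: field_simps)
    moreover have "t * (cmod z)^2 * (norm v)^2 = (cmod z)^2 * (t * (norm v)^2)" by (simp add: mult_ac)
    moreover have "(cmod z)^2 * (t * (norm v)^2) \<le> (cmod z)^2 * 1"
      by (rule mult_left_mono[OF \<open>t * (norm v)^2 \<le> 1\<close>]) simp
    ultimately have "2 * (cmod z)^2 \<le> (cmod z)^2" by linarith
    hence "cmod z = 0" by simp
    thus ?thesis unfolding z_def r_def by simp
  qed
  thus ?thesis using kW unfolding W_def by blast
qed


lemma mat_bdd:
  fixes n :: nat and T :: "nat \<Rightarrow> nat \<Rightarrow> 'b::chilbert \<Rightarrow> 'b"
  assumes T: "\<forall>i<n. \<forall>j<n. T i j \<in> BH"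
  shows "bdd_above {sqrt (\<Sum>i<n. (norm (\<Sum>j<n. T i j (x j)))\<^sup>2) | x. (\<Sum>j<n. (norm (x j))\<^sup>2) \<le> 1}"
proof (rule bdd_aboveI)
  fix z assume "z \<in> {sqrt (\<Sum>i<n. (norm (\<Sum>j<n. T i j (x j)))\<^sup>2) | x. (\<Sum>j<n. (norm (x j))\<^sup>2) \<le> 1}"
  then obtain x where x: "z = sqrt (\<Sum>i<n. (norm (\<Sum>j<n. T i j (x j)))\<^sup>2)" "(\<Sum>j<n. (norm (x j))\<^sup>2) \<le> 1"
    by blast
  have xj: "norm (x j) \<le> 1" if "j < n" for j
  proof -
    have "(norm (x j))^2 \<le> (\<Sum>j<n. (norm (x j))\<^sup>2)"
      by (rule member_le_sum[of j "{..<n}" "\<lambda>j. (norm (x j))\<^sup>2"]) (use that in auto)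
    hence "(norm (x j))^2 \<le> 1" using x(2) by linarith
    thus ?thesis by (simp add: power_le_one_iff)
  qed
  have ti: "norm (\<Sum>j<n. T i j (x j)) \<le> (\<Sum>j<n. opnorm (T i j))" if "i < n" for i
  proof -
    have "norm (\<Sum>j<n. T i j (x j)) \<le> (\<Sum>j<n. norm (T i j (x j)))" by (rule norm_sum)
    also have "\<dots> \<le> (\<Sum>j<n. opnorm (T i j))"
    proof (rule sum_mono)
      fix j assume j: "j \<in> {..<n}"
      have TB: "T i j \<in> BH" using T that j by auto
      have "norm (T i j (x j)) \<le> opnorm (T i j) * norm (x j)" by (rule opnorm_bound[OF TB])
      also have "\<dots> \<le> opnorm (T i j) * 1" using xj j by (intro mult_left_mono opnorm_nonneg[OF TB]) auto
      finally show "norm (T i j (x j)) \<le> opnorm (T i j)" by simp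
    qed
    finally show ?thesis .
  qed
  have "(\<Sum>i<n. (norm (\<Sum>j<n. T i j (x j)))\<^sup>2) \<le> (\<Sum>i<n. (\<Sum>j<n. opnorm (T i j))\<^sup>2)"
    by (rule sum_mono) (use ti in \<open>auto intro: power_mono\<close>)
  thus "z \<le> sqrt (\<Sum>i<n. (\<Sum>j<n. opnorm (T i j))\<^sup>2)" using x(1) by simp
qed

lemma mat_upper:
  fixes n :: nat and T :: "nat \<Rightarrow> nat \<Rightarrow> 'b::chilbert \<Rightarrow> 'b"
  assumes T: "\<forall>i<n. \<forall>j<n. T i j \<in> BH" and x: "(\<Sum>j<n. (norm (x j))\<^sup>2) \<le> 1"
  shows "sqrt (\<Sum>i<n. (norm (\<Sum>j<n. T i j (x j)))\<^sup>2) \<le> matnorm n T"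
  unfolding matnorm_def by (rule cSup_upper[OF _ mat_bdd[OF T]], rule CollectI, rule exI[of _ x], simp add: x)

lemma mat_ne: fixes n :: nat and T :: "nat \<Rightarrow> nat \<Rightarrow> 'b::chilbert \<Rightarrow> 'b" shows "{sqrt (\<Sum>i<n. (norm (\<Sum>j<n. T i j (x j)))\<^sup>2) | x. (\<Sum>j<n. (norm (x j))\<^sup>2) \<le> 1} \<noteq> {}"
proof -
  have "sqrt (\<Sum>i<n. (norm (\<Sum>j<n. T i j ((\<lambda>_. 0) j)))\<^sup>2) \<in> {sqrt (\<Sum>i<n. (norm (\<Sum>j<n. T i j (x j)))\<^sup>2) | x. (\<Sum>j<n. (norm (x j))\<^sup>2) \<le> 1}"
    by (rule CollectI, rule exI[of _ "\<lambda>_. 0"]) simp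
  thus ?thesis by (rule ex_in_conv[THEN iffD1, OF exI])
qed

lemma mat_contr:
  fixes n :: nat and T :: "nat \<Rightarrow> nat \<Rightarrow> 'b::chilbert \<Rightarrow> 'b"
  assumes T: "\<forall>i<n. \<forall>j<n. T i j \<in> BH" and E: "E \<in> BH" "opnorm E \<le> 1"
  shows "matnorm n (\<lambda>i j. T i j \<circ> E) \<le> matnorm n T"
  unfolding matnorm_def[of n "\<lambda>i j. T i j \<circ> E"]
proof (rule cSup_least[OF mat_ne])
  fix z assume "z \<in> {sqrt (\<Sum>i<n. (norm (\<Sum>j<n. (\<lambda>i j. T i j \<circ> E) i j (x j)))\<^sup>2) | x. (\<Sum>j<n. (norm (x j))\<^sup>2) \<le> 1}"
  then obtain x where x: "z = sqrt (\<Sum>i<n. (norm (\<Sum>j<n. T i j (E (x j))))\<^sup>2)" "(\<Sum>j<n. (norm (x j))\<^sup>2) \<le> 1"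
    by (auto simp: o_def)
  have "(\<Sum>j<n. (norm (E (x j)))\<^sup>2) \<le> (\<Sum>j<n. (norm (x j))\<^sup>2)"
  proof (rule sum_mono)
    fix j
    have "norm (E (x j)) \<le> opnorm E * norm (x j)" by (rule opnorm_bound[OF E(1)])
    also have "\<dots> \<le> 1 * norm (x j)" using E(2) by (intro mult_right_mono) auto
    finally show "(norm (E (x j)))\<^sup>2 \<le> (norm (x j))\<^sup>2" by (intro power_mono) auto
  qed
  hence "(\<Sum>j<n. (norm ((\<lambda>j. E (x j)) j))\<^sup>2) \<le> 1" using x(2) by simp
  from mat_upper[OF T this] show "z \<le> matnorm n T" using x(1) by simp
qed

lemma closure_conv:
  fixes F :: "'i \<Rightarrow> ('b::chilbert \<Rightarrow> 'b)"
  assumes FB: "\<And>\<alpha>. F \<alpha> \<in> BH" and Fn: "\<And>\<alpha>. opnorm (F \<alpha>) \<le> M"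
    and D: "\<And>\<xi>. \<xi> \<in> D \<Longrightarrow> \<exists>l. ((\<lambda>\<alpha>. F \<alpha> \<xi>) \<longlongrightarrow> l) G" and G: "G \<noteq> bot"
    and \<xi>: "\<xi> \<in> closure D"
  shows "\<exists>l. ((\<lambda>\<alpha>. F \<alpha> \<xi>) \<longlongrightarrow> l) G"
proof -
  have M0: "0 \<le> M" using Fn[of undefined] opnorm_nonneg[OF FB[of undefined]] by linarith
  have Fl: "norm (F \<alpha> x - F \<alpha> y) \<le> M * norm (x - y)" for \<alpha> x y
  proof -
    have "norm (F \<alpha> x - F \<alpha> y) = norm (F \<alpha> (x - y))" by (simp add: BH_diff[OF FB])
    also have "\<dots> \<le> opnorm (F \<alpha>) * norm (x - y)" by (rule opnorm_bound[OF FB])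
    also have "\<dots> \<le> M * norm (x - y)" by (rule mult_right_mono[OF Fn]) simp
    finally show ?thesis .
  qed
  obtain xs where xs: "\<forall>n. xs n \<in> D" "xs \<longlonglongrightarrow> \<xi>" using \<xi> unfolding closure_sequential by (elim exE conjE)
  have "\<forall>n. \<exists>l. ((\<lambda>\<alpha>. F \<alpha> (xs n)) \<longlongrightarrow> l) G" using xs(1) D by blast
  hence "\<exists>ls. \<forall>n. ((\<lambda>\<alpha>. F \<alpha> (xs n)) \<longlongrightarrow> ls n) G" by (rule choice)
  then obtain ls where ls: "\<And>n. ((\<lambda>\<alpha>. F \<alpha> (xs n)) \<longlongrightarrow> ls n) G" by blast
  have lsd: "norm (ls n - ls m) \<le> M * norm (xs n - xs m)" for n m
  proof (rule tendsto_le[OF G])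
    show "((\<lambda>\<alpha>. norm (F \<alpha> (xs n) - F \<alpha> (xs m))) \<longlongrightarrow> norm (ls n - ls m)) G"
      by (intro tendsto_intros ls)
  qed (auto simp: Fl)
  have "Cauchy xs" using xs(2) by (rule LIMSEQ_imp_Cauchy)
  have "Cauchy ls"
  proof (rule CauchyI)
    fix \<epsilon> :: real assume ep: "0 < \<epsilon>"
    obtain K where K: "\<forall>m\<ge>K. \<forall>n\<ge>K. norm (xs m - xs n) < \<epsilon> / (M + 1)"
      using CauchyD[OF \<open>Cauchy xs\<close>, of "\<epsilon> / (M + 1)"] ep M0 by auto
    have "norm (ls m - ls n) < \<epsilon>" if "m \<ge> K" "n \<ge> K" for m n
    proof -
      have "norm (ls m - ls n) \<le> M * norm (xs m - xs n)" by (rule lsd)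
      also have "\<dots> \<le> (M + 1) * norm (xs m - xs n)" by (intro mult_right_mono) auto
      also have "\<dots> < (M + 1) * (\<epsilon> / (M + 1))" using K that M0 by (intro mult_strict_left_mono) auto
      also have "\<dots> = \<epsilon>" using M0 by simp
      finally show ?thesis .
    qed
    thus "\<exists>K. \<forall>m\<ge>K. \<forall>n\<ge>K. norm (ls m - ls n) < \<epsilon>" by blast
  qed
  then obtain l where l: "ls \<longlonglongrightarrow> l" using Cauchy_convergent convergent_def by blast
  have "((\<lambda>\<alpha>. F \<alpha> \<xi>) \<longlongrightarrow> l) G"
  proof (rule tendstoI)
    fix \<epsilon> :: real assume ep: "0 < \<epsilon>"
    have e3: "0 < \<epsilon> / 3" using ep by simp
    have "\<forall>\<^sub>F n in sequentially. M * dist (xs n) \<xi> < \<epsilon> / 3"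
    proof -
      have "((\<lambda>n. dist (xs n) \<xi>) \<longlongrightarrow> 0) sequentially" using xs(2) tendsto_dist_iff by blast
      hence "((\<lambda>n. M * dist (xs n) \<xi>) \<longlongrightarrow> 0) sequentially" by (rule tendsto_mult_right_zero)
      from order_tendstoD(2)[OF this e3] show ?thesis .
    qed
    moreover have "\<forall>\<^sub>F n in sequentially. dist (ls n) l < \<epsilon> / 3" using l e3 by (rule tendstoD)
    ultimately have "\<forall>\<^sub>F n in sequentially. M * dist (xs n) \<xi> < \<epsilon> / 3 \<and> dist (ls n) l < \<epsilon> / 3"
      by (rule eventually_conj)
    then obtain n where n: "M * dist (xs n) \<xi> < \<epsilon> / 3" "dist (ls n) l < \<epsilon> / 3"
      using eventually_happens trivial_limit_sequentially by blast
    have "\<forall>\<^sub>F \<alpha> in G. dist (F \<alpha> (xs n)) (ls n) < \<epsilon> / 3" using ls[of n] e3 by (rule tendstoD)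
    thus "\<forall>\<^sub>F \<alpha> in G. dist (F \<alpha> \<xi>) l < \<epsilon>"
    proof eventually_elim
      case (elim \<alpha>)
      have "dist (F \<alpha> \<xi>) l \<le> dist (F \<alpha> \<xi>) (F \<alpha> (xs n)) + dist (F \<alpha> (xs n)) (ls n) + dist (ls n) l"
        using dist_triangle[of "F \<alpha> \<xi>" l "F \<alpha> (xs n)"] dist_triangle[of "F \<alpha> (xs n)" l "ls n"] by linarith
      moreover have "dist (F \<alpha> \<xi>) (F \<alpha> (xs n)) \<le> M * dist (xs n) \<xi>"
        using Fl[of \<alpha> \<xi> "xs n"] by (simp add: dist_norm norm_minus_commute)
      ultimately show ?case using elim n by linarith
    qed
  qed
  thus ?thesis by blast
qed

context PL begin

lemma LB: "L \<subseteq> BH" using L_BH by blast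
lemma aeL: "a \<in> A \<Longrightarrow> a \<circ> e \<alpha> \<in> L" using AL eL by blast
lemma opn_ae: assumes a: "a \<in> A" shows "opnorm (a \<circ> e \<alpha>) \<le> opnorm a"
proof -
  have "opnorm (a \<circ> e \<alpha>) \<le> opnorm a * opnorm (e \<alpha>)" by (rule opnorm_comp[OF A_BH[OF a] eBH])
  also have "\<dots> \<le> opnorm a * 1" by (rule mult_left_mono[OF en opnorm_nonneg[OF A_BH[OF a]]])
  finally show ?thesis by simp
qed

context
  fixes \<theta> :: "('a \<Rightarrow> 'a) \<Rightarrow> ('b::chilbert \<Rightarrow> 'b)"
  assumes th: "cc_hom L \<theta>"
begin

lemma thBH: "y \<in> L \<Longrightarrow> \<theta> y \<in> BH" by (rule cc_BH[OF th])
lemma th_lip: "y \<in> L \<Longrightarrow> z \<in> L \<Longrightarrow> norm (\<theta> y \<xi> - \<theta> z \<xi>) \<le> norm (B y - B z) * norm \<xi>"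
  by (rule cc_lip[OF th _ _ LB L_sc L_add])
lemma th_opn: "y \<in> L \<Longrightarrow> opnorm (\<theta> y) \<le> opnorm y"
  by (rule cc_contr[OF th _ L_BH])
lemma th_bound: assumes y: "y \<in> L" shows "norm (\<theta> y \<xi>) \<le> opnorm y * norm \<xi>"
proof -
  have "norm (\<theta> y \<xi>) \<le> opnorm (\<theta> y) * norm \<xi>" by (rule opnorm_bound[OF thBH[OF y]])
  also have "\<dots> \<le> opnorm y * norm \<xi>" by (rule mult_right_mono[OF th_opn[OF y]]) simp
  finally show ?thesis .
qed
lemma th_mult: "y \<in> L \<Longrightarrow> z \<in> L \<Longrightarrow> \<theta> (y \<circ> z) = \<theta> y \<circ> \<theta> z" by (rule cc_mult[OF th])

lemma th_K: "y \<in> L \<Longrightarrow> \<theta> y \<zeta> \<in> {\<theta> y \<zeta> | y \<zeta>. y \<in> L}"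
  by (rule CollectI, rule exI[of _ y], rule exI[of _ \<zeta>]) simp

lemma vanish:
  assumes orth: "\<And>v. v \<in> {\<theta> y \<zeta> | y \<zeta>. y \<in> L} \<Longrightarrow> cinner v \<eta> = 0" and y: "y \<in> L"
  shows "\<theta> y \<eta> = 0"
proof -
  define w where "w \<beta> = \<theta> (e \<beta>) \<eta>" for \<beta>
  have wK: "cinner (w \<beta>) \<eta> = 0" for \<beta> unfolding w_def by (rule orth[OF th_K[OF eL]])
  have wB: "norm (w \<beta>) \<le> norm \<eta>" for \<beta>
  proof -
    have "norm (w \<beta>) \<le> opnorm (e \<beta>) * norm \<eta>" unfolding w_def by (rule th_bound[OF eL])
    also have "\<dots> \<le> 1 * norm \<eta>" by (rule mult_right_mono[OF en]) simp
    finally show ?thesis by simp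
  qed
  have step: "(norm (w \<beta>))^2 * (real n + 1) \<le> (norm \<eta>)^2" for n \<beta>
  proof (induction n arbitrary: \<beta>)
    case 0 thus ?case using wB[of \<beta>] by (simp add: power_mono)
  next
    case (Suc n)
    define t where "t = real n + 1"
    have t0: "0 < t" by (simp add: t_def)
    have IH: "(norm (w \<gamma>))^2 * t \<le> (norm \<eta>)^2" for \<gamma> using Suc.IH unfolding t_def .
    have h1: "norm (w \<beta> + t *\<^sub>R \<theta> (e \<beta> \<circ> e \<gamma>) \<eta>) \<le> sqrt ((norm \<eta>)^2 * (1 + t))" for \<gamma>
    proof -
      have eB: "\<theta> (e \<beta>) \<in> BH" by (rule thBH[OF eL])
      have "\<theta> (e \<beta>) (\<eta> + t *\<^sub>R w \<gamma>) = w \<beta> + t *\<^sub>R \<theta> (e \<beta> \<circ> e \<gamma>) \<eta>"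
        by (simp add: BH_add[OF eB] BH_scaleR[OF eB] w_def th_mult[OF eL eL])
      hence "norm (w \<beta> + t *\<^sub>R \<theta> (e \<beta> \<circ> e \<gamma>) \<eta>) \<le> opnorm (e \<beta>) * norm (\<eta> + t *\<^sub>R w \<gamma>)"
        using th_bound[OF eL, of \<beta> "\<eta> + t *\<^sub>R w \<gamma>"] by simp
      also have "\<dots> \<le> 1 * norm (\<eta> + t *\<^sub>R w \<gamma>)" by (rule mult_right_mono[OF en]) simp
      finally have a: "norm (w \<beta> + t *\<^sub>R \<theta> (e \<beta> \<circ> e \<gamma>) \<eta>) \<le> norm (\<eta> + t *\<^sub>R w \<gamma>)" by simp
      have "cinner \<eta> (t *\<^sub>R w \<gamma>) = 0"
        by (simp add: cinner_scaleR_right) (metis cinner_commute wK complex_cnj_zero)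
      hence "(norm (\<eta> + t *\<^sub>R w \<gamma>))^2 = (norm \<eta>)^2 + t^2 * (norm (w \<gamma>))^2"
        using norm_add_sq[of \<eta> "t *\<^sub>R w \<gamma>"] t0 by (simp add: power_mult_distrib)
      also have "t^2 * (norm (w \<gamma>))^2 = t * ((norm (w \<gamma>))^2 * t)" by (simp add: power2_eq_square)
      also have "\<dots> \<le> t * (norm \<eta>)^2" using IH[of \<gamma>] t0 by (intro mult_left_mono) auto
      finally have "(norm (\<eta> + t *\<^sub>R w \<gamma>))^2 \<le> (norm \<eta>)^2 * (1 + t)" by (simp add: algebra_simps)
      hence "norm (\<eta> + t *\<^sub>R w \<gamma>) \<le> sqrt ((norm \<eta>)^2 * (1 + t))" by (rule real_le_rsqrt)
      with a show ?thesis by linarith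
    qed
    have lim1: "((\<lambda>\<gamma>. \<theta> (e \<beta> \<circ> e \<gamma>) \<eta>) \<longlongrightarrow> w \<beta>) N"
    proof (rule Btend_pt[OF ee, where c="norm \<eta>"])
      fix \<gamma> show "norm (\<theta> (e \<beta> \<circ> e \<gamma>) \<eta> - w \<beta>) \<le> norm (B (e \<beta> \<circ> e \<gamma>) - B (e \<beta>)) * norm \<eta>"
        unfolding w_def by (rule th_lip[OF aeL[OF eA] eL])
    qed
    have "((\<lambda>\<gamma>. norm (w \<beta> + t *\<^sub>R \<theta> (e \<beta> \<circ> e \<gamma>) \<eta>)) \<longlongrightarrow> norm (w \<beta> + t *\<^sub>R w \<beta>)) N"
      by (intro tendsto_intros lim1)
    hence "norm (w \<beta> + t *\<^sub>R w \<beta>) \<le> sqrt ((norm \<eta>)^2 * (1 + t))"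
      using h1 by (intro tendsto_le[OF Nnb tendsto_const]) auto
    moreover have "w \<beta> + t *\<^sub>R w \<beta> = (1 + t) *\<^sub>R w \<beta>" by (simp add: algebra_simps)
    ultimately have "(1 + t) * norm (w \<beta>) \<le> sqrt ((norm \<eta>)^2 * (1 + t))" using t0 by simp
    hence "((1 + t) * norm (w \<beta>))^2 \<le> (sqrt ((norm \<eta>)^2 * (1 + t)))^2"
      using t0 by (intro power_mono) auto
    also have "\<dots> = (norm \<eta>)^2 * (1 + t)" using t0 by (intro real_sqrt_pow2) simp
    finally have "(1 + t) * ((1 + t) * (norm (w \<beta>))^2) \<le> (1 + t) * (norm \<eta>)^2"
      by (simp add: power_mult_distrib power2_eq_square mult_ac)
    hence "(1 + t) * (norm (w \<beta>))^2 \<le> (norm \<eta>)^2" using t0 by simp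
    thus ?case by (simp add: t_def algebra_simps)
  qed
  have w0: "w \<beta> = 0" for \<beta>
  proof (rule ccontr)
    assume "w \<beta> \<noteq> 0"
    hence p: "0 < (norm (w \<beta>))^2" by simp
    obtain n :: nat where n: "(norm \<eta>)^2 / (norm (w \<beta>))^2 < real n" using reals_Archimedean2 by blast
    hence "(norm \<eta>)^2 < real n * (norm (w \<beta>))^2" using p by (simp add: field_simps)
    also have "\<dots> \<le> (norm (w \<beta>))^2 * (real n + 1)" using p by (simp add: algebra_simps)
    finally show False using step[of \<beta> n] by simp
  qed
  have "((\<lambda>\<beta>. \<theta> (y \<circ> e \<beta>) \<eta>) \<longlongrightarrow> \<theta> y \<eta>) N"
  proof (rule Btend_pt[OF Lrt[OF y], where c="norm \<eta>"])
    fix \<beta> show "norm (\<theta> (y \<circ> e \<beta>) \<eta> - \<theta> y \<eta>) \<le> norm (B (y \<circ> e \<beta>) - B y) * norm \<eta>"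
      by (rule th_lip[OF aeL[OF LA_sub[OF y]] y])
  qed
  moreover have "\<theta> (y \<circ> e \<beta>) \<eta> = 0" for \<beta>
    using w0[of \<beta>] by (simp add: th_mult[OF y eL] w_def BH_zero[OF thBH[OF y]])
  ultimately have "((\<lambda>\<beta>. 0) \<longlongrightarrow> \<theta> y \<eta>) N" by simp
  thus ?thesis using tendsto_unique[OF Nnb _ tendsto_const] by metis
qed


lemma F_bound: assumes a: "a \<in> A" shows "opnorm (\<theta> (a \<circ> e \<alpha>)) \<le> opnorm a"
  using th_opn[OF aeL[OF a, of \<alpha>]] opn_ae[OF a, of \<alpha>] by linarith

lemma conv: assumes a: "a \<in> A" shows "\<exists>l. ((\<lambda>\<alpha>. \<theta> (a \<circ> e \<alpha>) \<xi>) \<longlongrightarrow> l) N"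
proof -
  define K0 where "K0 = {\<theta> y \<zeta> | y \<zeta>. y \<in> L}"
  define C where "C = {\<xi>. \<exists>l. ((\<lambda>\<alpha>. \<theta> (a \<circ> e \<alpha>) \<xi>) \<longlongrightarrow> l) N}"
  have FB: "\<theta> (a \<circ> e \<alpha>) \<in> BH" for \<alpha> by (rule thBH[OF aeL[OF a]])
  have KC: "K0 \<subseteq> C"
  proof
    fix v assume "v \<in> K0"
    then obtain y \<zeta> where y: "y \<in> L" "v = \<theta> y \<zeta>" unfolding K0_def by blast
    have yA: "y \<in> A" by (rule LA_sub[OF y(1)])
    have "((\<lambda>\<alpha>. \<theta> (a \<circ> e \<alpha> \<circ> y) \<zeta>) \<longlongrightarrow> \<theta> (a \<circ> y) \<zeta>) N"
    proof (rule Btend_pt[where c="norm \<zeta>"])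
      have "((\<lambda>\<alpha>. B a o\<^sub>L B (e \<alpha> \<circ> y)) \<longlongrightarrow> B a o\<^sub>L B y) N"
        by (rule bounded_bilinear.tendsto[OF bounded_bilinear_blinfun_compose tendsto_const lcai[OF yA]])
      moreover have "B a o\<^sub>L B (e \<alpha> \<circ> y) = B (a \<circ> e \<alpha> \<circ> y)" for \<alpha>
        using a yA by (simp add: B_comp A_BH eBH BH_comp comp_assoc)
      moreover have "B a o\<^sub>L B y = B (a \<circ> y)" using a yA by (simp add: B_comp A_BH)
      ultimately show "((\<lambda>\<alpha>. B (a \<circ> e \<alpha> \<circ> y)) \<longlongrightarrow> B (a \<circ> y)) N" by simp
    next
      fix \<alpha>
      show "norm (\<theta> (a \<circ> e \<alpha> \<circ> y) \<zeta> - \<theta> (a \<circ> y) \<zeta>) \<le> norm (B (a \<circ> e \<alpha> \<circ> y) - B (a \<circ> y)) * norm \<zeta>"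
        by (rule th_lip[OF AL[OF A_comp[OF a eA] y(1)] AL[OF a y(1)]])
    qed
    moreover have "\<theta> (a \<circ> e \<alpha> \<circ> y) \<zeta> = \<theta> (a \<circ> e \<alpha>) v" for \<alpha>
      using y by (simp add: th_mult[OF aeL[OF a] y(1)])
    ultimately show "v \<in> C" unfolding C_def by auto
  qed
  have C0: "0 \<in> C" unfolding C_def using FB by (auto simp: BH_zero intro!: exI[of _ 0])
  have Cadd: "x + y \<in> C" if xy: "x \<in> C" "y \<in> C" for x y
  proof -
    obtain lx ly where l: "((\<lambda>\<alpha>. \<theta> (a \<circ> e \<alpha>) x) \<longlongrightarrow> lx) N" "((\<lambda>\<alpha>. \<theta> (a \<circ> e \<alpha>) y) \<longlongrightarrow> ly) N"
      using xy unfolding C_def by blast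
    have "((\<lambda>\<alpha>. \<theta> (a \<circ> e \<alpha>) x + \<theta> (a \<circ> e \<alpha>) y) \<longlongrightarrow> lx + ly) N" by (rule tendsto_add[OF l])
    thus ?thesis unfolding C_def by (simp add: BH_add[OF FB]) blast
  qed
  have Csc: "scaleC c x \<in> C" if x: "x \<in> C" for c x
  proof -
    obtain lx where l: "((\<lambda>\<alpha>. \<theta> (a \<circ> e \<alpha>) x) \<longlongrightarrow> lx) N" using x unfolding C_def by blast
    have "((\<lambda>\<alpha>. scaleC c (\<theta> (a \<circ> e \<alpha>) x)) \<longlongrightarrow> scaleC c lx) N"
      by (rule bounded_linear.tendsto[OF bounded_linear_scaleC l])
    thus ?thesis unfolding C_def by (simp add: BH_scaleC[OF FB]) blast
  qed
  have spanC: "c_span K0 \<subseteq> C" by (rule cs_least[OF C0 Cadd Csc KC])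
  have clC: "closure (c_span K0) \<subseteq> C"
  proof
    fix x assume x: "x \<in> closure (c_span K0)"
    show "x \<in> C" unfolding C_def
      by (rule CollectI, rule closure_conv[OF FB F_bound[OF a] _ Nnb x]) (use spanC in \<open>auto simp: C_def\<close>)
  qed
  obtain k where k: "k \<in> closure (c_span K0)" "\<forall>v\<in>closure (c_span K0). cinner v (\<xi> - k) = 0"
    using projection by blast
  have "cinner v (\<xi> - k) = 0" if "v \<in> K0" for v
    using k(2) that cs_sub closure_subset by blast
  hence "\<theta> (a \<circ> e \<alpha>) (\<xi> - k) = 0" for \<alpha> using vanish[OF _ aeL[OF a]] unfolding K0_def by blast
  hence "\<xi> - k \<in> C" unfolding C_def by (auto intro!: exI[of _ 0])
  moreover have "k \<in> C" using clC k(1) by blast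
  ultimately have "k + (\<xi> - k) \<in> C" by (rule Cadd[rotated])
  thus ?thesis unfolding C_def by simp
qed


definition pi0 :: "('a \<Rightarrow> 'a) \<Rightarrow> 'b \<Rightarrow> 'b" where
  "pi0 a \<xi> = Lim N (\<lambda>\<alpha>. \<theta> (a \<circ> e \<alpha>) \<xi>)"

lemma pi_lim: assumes a: "a \<in> A" shows "((\<lambda>\<alpha>. \<theta> (a \<circ> e \<alpha>) \<xi>) \<longlongrightarrow> pi0 a \<xi>) N"
proof -
  obtain l where l: "((\<lambda>\<alpha>. \<theta> (a \<circ> e \<alpha>) \<xi>) \<longlongrightarrow> l) N" using conv[OF a] by blast
  have "pi0 a \<xi> = l" unfolding pi0_def by (rule tendsto_Lim[OF Nnb l])
  thus ?thesis using l by simp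
qed

lemma pi_BH: assumes a: "a \<in> A" shows "pi0 a \<in> BH"
proof (rule BH_I[where K="opnorm a"])
  have FB: "\<theta> (a \<circ> e \<alpha>) \<in> BH" for \<alpha> by (rule thBH[OF aeL[OF a]])
  fix x y
  have "((\<lambda>\<alpha>. \<theta> (a \<circ> e \<alpha>) (x + y)) \<longlongrightarrow> pi0 a x + pi0 a y) N"
    using tendsto_add[OF pi_lim[OF a, of x] pi_lim[OF a, of y]] by (simp add: BH_add[OF FB])
  thus "pi0 a (x + y) = pi0 a x + pi0 a y" using tendsto_unique[OF Nnb pi_lim[OF a]] by blast
next
  have FB: "\<theta> (a \<circ> e \<alpha>) \<in> BH" for \<alpha> by (rule thBH[OF aeL[OF a]])
  fix c x
  have "((\<lambda>\<alpha>. \<theta> (a \<circ> e \<alpha>) (scaleC c x)) \<longlongrightarrow> scaleC c (pi0 a x)) N"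
    using bounded_linear.tendsto[OF bounded_linear_scaleC pi_lim[OF a, of x]] by (simp add: BH_scaleC[OF FB])
  thus "pi0 a (scaleC c x) = scaleC c (pi0 a x)" using tendsto_unique[OF Nnb pi_lim[OF a]] by blast
next
  fix x
  show "norm (pi0 a x) \<le> opnorm a * norm x"
  proof (rule tendsto_le[OF Nnb tendsto_const tendsto_norm[OF pi_lim[OF a]]])
    show "\<forall>\<^sub>F \<alpha> in N. norm (\<theta> (a \<circ> e \<alpha>) x) \<le> opnorm a * norm x"
    proof (rule always_eventually, rule allI)
      fix \<alpha>
      have "norm (\<theta> (a \<circ> e \<alpha>) x) \<le> opnorm (a \<circ> e \<alpha>) * norm x" by (rule th_bound[OF aeL[OF a]])
      also have "\<dots> \<le> opnorm a * norm x" by (rule mult_right_mono[OF opn_ae[OF a]]) simp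
      finally show "norm (\<theta> (a \<circ> e \<alpha>) x) \<le> opnorm a * norm x" .
    qed
  qed
qed

lemma pi_ext: assumes y: "y \<in> L" shows "pi0 y = \<theta> y"
proof
  fix \<xi>
  have "((\<lambda>\<beta>. \<theta> (y \<circ> e \<beta>) \<xi>) \<longlongrightarrow> \<theta> y \<xi>) N"
  proof (rule Btend_pt[OF Lrt[OF y], where c="norm \<xi>"])
    fix \<beta> show "norm (\<theta> (y \<circ> e \<beta>) \<xi> - \<theta> y \<xi>) \<le> norm (B (y \<circ> e \<beta>) - B y) * norm \<xi>"
      by (rule th_lip[OF aeL[OF LA_sub[OF y]] y])
  qed
  thus "pi0 y \<xi> = \<theta> y \<xi>" using tendsto_unique[OF Nnb pi_lim[OF LA_sub[OF y]]] by blast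
qed

lemma pi_K: assumes a: "a \<in> A" and y: "y \<in> L" shows "pi0 a (\<theta> y \<zeta>) = \<theta> (a \<circ> y) \<zeta>"
proof -
  have yA: "y \<in> A" by (rule LA_sub[OF y])
  have "((\<lambda>\<alpha>. \<theta> (a \<circ> e \<alpha> \<circ> y) \<zeta>) \<longlongrightarrow> \<theta> (a \<circ> y) \<zeta>) N"
  proof (rule Btend_pt[where c="norm \<zeta>"])
    have "((\<lambda>\<alpha>. B a o\<^sub>L B (e \<alpha> \<circ> y)) \<longlongrightarrow> B a o\<^sub>L B y) N"
      by (rule bounded_bilinear.tendsto[OF bounded_bilinear_blinfun_compose tendsto_const lcai[OF yA]])
    moreover have "B a o\<^sub>L B (e \<alpha> \<circ> y) = B (a \<circ> e \<alpha> \<circ> y)" for \<alpha>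
      using a yA by (simp add: B_comp A_BH eBH BH_comp comp_assoc)
    moreover have "B a o\<^sub>L B y = B (a \<circ> y)" using a yA by (simp add: B_comp A_BH)
    ultimately show "((\<lambda>\<alpha>. B (a \<circ> e \<alpha> \<circ> y)) \<longlongrightarrow> B (a \<circ> y)) N" by simp
  next
    fix \<alpha>
    show "norm (\<theta> (a \<circ> e \<alpha> \<circ> y) \<zeta> - \<theta> (a \<circ> y) \<zeta>) \<le> norm (B (a \<circ> e \<alpha> \<circ> y) - B (a \<circ> y)) * norm \<zeta>"
      by (rule th_lip[OF AL[OF A_comp[OF a eA] y] AL[OF a y]])
  qed
  moreover have "\<theta> (a \<circ> e \<alpha> \<circ> y) \<zeta> = \<theta> (a \<circ> e \<alpha>) (\<theta> y \<zeta>)" for \<alpha>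
    by (simp add: th_mult[OF aeL[OF a] y])
  ultimately have "((\<lambda>\<alpha>. \<theta> (a \<circ> e \<alpha>) (\<theta> y \<zeta>)) \<longlongrightarrow> \<theta> (a \<circ> y) \<zeta>) N" by simp
  thus ?thesis using tendsto_unique[OF Nnb pi_lim[OF a]] by blast
qed

lemma pi_add: assumes a: "a \<in> A" and b: "b \<in> A"
  shows "pi0 (\<lambda>x. a x + b x) = (\<lambda>y. pi0 a y + pi0 b y)"
proof
  fix \<xi>
  have eq: "(\<lambda>x. a x + b x) \<circ> e \<alpha> = (\<lambda>x. (a \<circ> e \<alpha>) x + (b \<circ> e \<alpha>) x)" for \<alpha> by (simp add: o_def)
  have "\<theta> ((\<lambda>x. a x + b x) \<circ> e \<alpha>) \<xi> = \<theta> (a \<circ> e \<alpha>) \<xi> + \<theta> (b \<circ> e \<alpha>) \<xi>" for \<alpha>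
    unfolding eq cc_add[OF th aeL[OF a] aeL[OF b]] ..
  hence "((\<lambda>\<alpha>. \<theta> ((\<lambda>x. a x + b x) \<circ> e \<alpha>) \<xi>) \<longlongrightarrow> pi0 a \<xi> + pi0 b \<xi>) N"
    using tendsto_add[OF pi_lim[OF a, of \<xi>] pi_lim[OF b, of \<xi>]] by simp
  thus "pi0 (\<lambda>x. a x + b x) \<xi> = pi0 a \<xi> + pi0 b \<xi>" using tendsto_unique[OF Nnb pi_lim[OF A_add[OF a b]]] by blast
qed

lemma pi_sc: assumes a: "a \<in> A"
  shows "pi0 (\<lambda>x. scaleC c (a x)) = (\<lambda>y. scaleC c (pi0 a y))"
proof
  fix \<xi>
  have eq: "(\<lambda>x. scaleC c (a x)) \<circ> e \<alpha> = (\<lambda>x. scaleC c ((a \<circ> e \<alpha>) x))" for \<alpha> by (simp add: o_def)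
  have "\<theta> ((\<lambda>x. scaleC c (a x)) \<circ> e \<alpha>) \<xi> = scaleC c (\<theta> (a \<circ> e \<alpha>) \<xi>)" for \<alpha>
    unfolding eq cc_sc[OF th aeL[OF a]] ..
  hence "((\<lambda>\<alpha>. \<theta> ((\<lambda>x. scaleC c (a x)) \<circ> e \<alpha>) \<xi>) \<longlongrightarrow> scaleC c (pi0 a \<xi>)) N"
    using bounded_linear.tendsto[OF bounded_linear_scaleC pi_lim[OF a, of \<xi>]] by simp
  thus "pi0 (\<lambda>x. scaleC c (a x)) \<xi> = scaleC c (pi0 a \<xi>)" using tendsto_unique[OF Nnb pi_lim[OF A_sc[OF a]]] by blast
qed

lemma pi_mult: assumes a: "a \<in> A" and b: "b \<in> A"
  shows "pi0 (a \<circ> b) = pi0 a \<circ> pi0 b"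
proof
  fix \<xi>
  have "((\<lambda>\<beta>. pi0 a (\<theta> (b \<circ> e \<beta>) \<xi>)) \<longlongrightarrow> pi0 a (pi0 b \<xi>)) N"
    by (rule bounded_linear.tendsto[OF BH_bl[OF pi_BH[OF a]] pi_lim[OF b]])
  moreover have "pi0 a (\<theta> (b \<circ> e \<beta>) \<xi>) = \<theta> ((a \<circ> b) \<circ> e \<beta>) \<xi>" for \<beta>
    using pi_K[OF a aeL[OF b]] by (simp add: comp_assoc)
  ultimately have "((\<lambda>\<beta>. \<theta> ((a \<circ> b) \<circ> e \<beta>) \<xi>) \<longlongrightarrow> pi0 a (pi0 b \<xi>)) N" by simp
  thus "pi0 (a \<circ> b) \<xi> = (pi0 a \<circ> pi0 b) \<xi>" using tendsto_unique[OF Nnb pi_lim[OF A_comp[OF a b]]] by simp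
qed


lemma th_mat: "n \<ge> 1 \<Longrightarrow> (\<forall>i<n. \<forall>j<n. b i j \<in> L) \<Longrightarrow> matnorm n (\<lambda>i j. \<theta> (b i j)) \<le> matnorm n b"
  using th[unfolded cc_hom_def, THEN conjunct2, THEN conjunct2, THEN conjunct2, THEN conjunct2] by blast

lemma pi_mat:
  assumes n: "n \<ge> 1" and a: "\<forall>i<n. \<forall>j<n. a i j \<in> A"
  shows "matnorm n (\<lambda>i j. pi0 (a i j)) \<le> matnorm n a"
  unfolding matnorm_def[of n "\<lambda>i j. pi0 (a i j)"]
proof (rule cSup_least[OF mat_ne])
  fix z assume "z \<in> {sqrt (\<Sum>i<n. (norm (\<Sum>j<n. (\<lambda>i j. pi0 (a i j)) i j (x j)))\<^sup>2) | x. (\<Sum>j<n. (norm (x j))\<^sup>2) \<le> 1}"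
  then obtain x where x: "z = sqrt (\<Sum>i<n. (norm (\<Sum>j<n. pi0 (a i j) (x j)))\<^sup>2)" "(\<Sum>j<n. (norm (x j))\<^sup>2) \<le> 1"
    by auto
  have lim: "((\<lambda>\<alpha>. sqrt (\<Sum>i<n. (norm (\<Sum>j<n. \<theta> (a i j \<circ> e \<alpha>) (x j)))\<^sup>2)) \<longlongrightarrow> z) N"
    unfolding x(1)
    by (intro tendsto_real_sqrt tendsto_sum tendsto_power tendsto_norm pi_lim) (use a in auto)
  have aB: "\<forall>i<n. \<forall>j<n. a i j \<in> BH" using a A_BH by blast
  have bnd: "sqrt (\<Sum>i<n. (norm (\<Sum>j<n. \<theta> (a i j \<circ> e \<alpha>) (x j)))\<^sup>2) \<le> matnorm n a" for \<alpha>
  proof -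
    have B1: "\<forall>i<n. \<forall>j<n. \<theta> (a i j \<circ> e \<alpha>) \<in> BH" using a by (auto intro: thBH aeL)
    have L1: "\<forall>i<n. \<forall>j<n. a i j \<circ> e \<alpha> \<in> L" using a by (auto intro: aeL)
    have "sqrt (\<Sum>i<n. (norm (\<Sum>j<n. \<theta> (a i j \<circ> e \<alpha>) (x j)))\<^sup>2) \<le> matnorm n (\<lambda>i j. \<theta> (a i j \<circ> e \<alpha>))"
      using mat_upper[of n "\<lambda>i j. \<theta> (a i j \<circ> e \<alpha>)" x] B1 x(2) by simp
    also have "\<dots> \<le> matnorm n (\<lambda>i j. a i j \<circ> e \<alpha>)"
      using th_mat[OF n, of "\<lambda>i j. a i j \<circ> e \<alpha>"] L1 by simp
    also have "\<dots> \<le> matnorm n a" by (rule mat_contr[OF aB eBH en])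
    finally show ?thesis .
  qed
  show "z \<le> matnorm n a"
    by (rule tendsto_le[OF Nnb tendsto_const lim]) (use bnd in simp)
qed

lemma pi_cc: "cc_hom A pi0"
  unfolding cc_hom_def
proof (intro conjI ballI allI impI)
  show "\<And>a. a \<in> A \<Longrightarrow> pi0 a \<in> BH" by (rule pi_BH)
  show "\<And>a b. a \<in> A \<Longrightarrow> b \<in> A \<Longrightarrow> pi0 (\<lambda>x. a x + b x) = (\<lambda>y. pi0 a y + pi0 b y)" by (rule pi_add)
  show "\<And>c a. a \<in> A \<Longrightarrow> pi0 (\<lambda>x. scaleC c (a x)) = (\<lambda>y. scaleC c (pi0 a y))" by (rule pi_sc)
  show "\<And>a b. a \<in> A \<Longrightarrow> b \<in> A \<Longrightarrow> pi0 (a \<circ> b) = pi0 a \<circ> pi0 b" by (rule pi_mult)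
  show "\<And>n a. 1 \<le> n \<Longrightarrow> \<forall>i<n. \<forall>j<n. a i j \<in> A \<Longrightarrow> matnorm n (\<lambda>i j. pi0 (a i j)) \<le> matnorm n a"
    by (rule pi_mat)
qed

end

lemma part2:
  fixes \<theta> :: "('a \<Rightarrow> 'a) \<Rightarrow> ('b::chilbert \<Rightarrow> 'b)"
  assumes th: "cc_hom L \<theta>"
  shows "(\<exists>\<pi>. cc_hom A \<pi> \<and> (\<forall>x\<in>L. \<pi> x = \<theta> x))
     \<and> (nondegenerate L \<theta> \<longrightarrow>
          (\<exists>\<pi>. cc_hom A \<pi> \<and> (\<forall>x\<in>L. \<pi> x = \<theta> x) \<and> nondegenerate A \<pi>
               \<and> (\<forall>\<pi>'. cc_hom A \<pi>' \<and> (\<forall>x\<in>L. \<pi>' x = \<theta> x) \<longrightarrow> (\<forall>a\<in>A. \<pi>' a = \<pi> a))))"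
proof -
  define \<pi> where "\<pi> = pi0 \<theta>"
  have cc: "cc_hom A \<pi>" unfolding \<pi>_def by (rule pi_cc[OF th])
  have ext: "\<forall>x\<in>L. \<pi> x = \<theta> x" unfolding \<pi>_def using pi_ext[OF th] by blast
  have "nondegenerate A \<pi> \<and> (\<forall>\<pi>'. cc_hom A \<pi>' \<and> (\<forall>x\<in>L. \<pi>' x = \<theta> x) \<longrightarrow> (\<forall>a\<in>A. \<pi>' a = \<pi> a))"
    if nd: "nondegenerate L \<theta>"
  proof
    have "{\<theta> a \<xi> | a \<xi>. a \<in> L} \<subseteq> {\<pi> a \<xi> | a \<xi>. a \<in> A}"
    proof
      fix z assume "z \<in> {\<theta> a \<xi> | a \<xi>. a \<in> L}"
      then obtain a \<xi> where a: "a \<in> L" "z = \<theta> a \<xi>" by blast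
      hence "z = \<pi> a \<xi>" "a \<in> A" using ext LA_sub by auto
      thus "z \<in> {\<pi> a \<xi> | a \<xi>. a \<in> A}" by blast
    qed
    hence "closure (c_span {\<theta> a \<xi> | a \<xi>. a \<in> L}) \<subseteq> closure (c_span {\<pi> a \<xi> | a \<xi>. a \<in> A})"
      by (intro closure_mono cs_mono)
    thus "nondegenerate A \<pi>" using nd unfolding nondegenerate_def by auto
  next
    show "\<forall>\<pi>'. cc_hom A \<pi>' \<and> (\<forall>x\<in>L. \<pi>' x = \<theta> x) \<longrightarrow> (\<forall>a\<in>A. \<pi>' a = \<pi> a)"
    proof (intro allI impI ballI, elim conjE)
      fix \<pi>' a assume h': "cc_hom A \<pi>'" and ext': "\<forall>x\<in>L. \<pi>' x = \<theta> x" and a: "a \<in> A"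
      define W where "W = {\<xi>. \<pi>' a \<xi> = \<pi> a \<xi>}"
      have B1: "\<pi>' a \<in> BH" by (rule cc_BH[OF h' a])
      have B2: "\<pi> a \<in> BH" by (rule cc_BH[OF cc a])
      have "closed W" unfolding W_def
        by (intro closed_Collect_eq linear_continuous_on BH_bl B1 B2)
      moreover have "0 \<in> W" unfolding W_def by (simp add: BH_zero[OF B1] BH_zero[OF B2])
      moreover have "x + y \<in> W" if "x \<in> W" "y \<in> W" for x y
        using that unfolding W_def by (simp add: BH_add[OF B1] BH_add[OF B2])
      moreover have "scaleC c x \<in> W" if "x \<in> W" for c x
        using that unfolding W_def by (simp add: BH_scaleC[OF B1] BH_scaleC[OF B2])
      moreover have "{\<theta> a \<xi> | a \<xi>. a \<in> L} \<subseteq> W"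
      proof
        fix z assume "z \<in> {\<theta> a \<xi> | a \<xi>. a \<in> L}"
        then obtain y \<zeta> where y: "y \<in> L" "z = \<theta> y \<zeta>" by blast
        have yA: "y \<in> A" by (rule LA_sub[OF y(1)])
        have "\<pi>' a z = \<pi>' (a \<circ> y) \<zeta>" using cc_mult[OF h' a yA] ext' y by simp
        also have "\<dots> = \<theta> (a \<circ> y) \<zeta>" using ext' AL[OF a y(1)] by simp
        also have "\<dots> = \<pi> a z" unfolding \<pi>_def y(2) by (rule pi_K[OF th a y(1), symmetric])
        finally show "z \<in> W" unfolding W_def by simp
      qed
      ultimately have "closure (c_span {\<theta> a \<xi> | a \<xi>. a \<in> L}) \<subseteq> W" by (rule cl_least)
      hence "W = UNIV" using nd unfolding nondegenerate_def by auto
      thus "\<pi>' a = \<pi> a" unfolding W_def by auto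
    qed
  qed
  thus ?thesis using cc ext by blast
qed

end

theorem proposition2p12:
  fixes A :: "('a::chilbert \<Rightarrow> 'a) set"
    and le :: "'i \<Rightarrow> 'i \<Rightarrow> bool"
    and e :: "'i \<Rightarrow> ('a \<Rightarrow> 'a)"
  assumes "op_algebra A"
    and "property_L A le e"
  shows "(\<forall>\<pi> :: ('a \<Rightarrow> 'a) \<Rightarrow> ('b::chilbert \<Rightarrow> 'b).
            cc_hom A \<pi> \<longrightarrow> cc_hom (LA A le e) \<pi>
              \<and> (nondegenerate A \<pi> \<longrightarrow> nondegenerate (LA A le e) \<pi>))
     \<and> (\<forall>\<theta> :: ('a \<Rightarrow> 'a) \<Rightarrow> ('b \<Rightarrow> 'b).
            cc_hom (LA A le e) \<theta> \<longrightarrow>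
              (\<exists>\<pi>. cc_hom A \<pi> \<and> (\<forall>x\<in>LA A le e. \<pi> x = \<theta> x))
              \<and> (nondegenerate (LA A le e) \<theta> \<longrightarrow>
                   (\<exists>\<pi>. cc_hom A \<pi> \<and> (\<forall>x\<in>LA A le e. \<pi> x = \<theta> x) \<and> nondegenerate A \<pi>
                        \<and> (\<forall>\<pi>'. cc_hom A \<pi>' \<and> (\<forall>x\<in>LA A le e. \<pi>' x = \<theta> x)
                                 \<longrightarrow> (\<forall>a\<in>A. \<pi>' a = \<pi> a)))))
     \<and> (\<forall>\<pi> :: ('a \<Rightarrow> 'a) \<Rightarrow> ('b \<Rightarrow> 'b).
            cc_hom A \<pi> \<longrightarrow>
              {T \<in> BH. \<forall>a\<in>A. T \<circ> \<pi> a \<in> \<pi> ` A}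
              = {T \<in> BH. \<forall>a\<in>LA A le e. T \<circ> \<pi> a \<in> \<pi> ` LA A le e})"
proof -
  interpret PL A le e using assms by unfold_locales
  show ?thesis
  proof (intro conjI)
    show "\<forall>\<pi> :: ('a \<Rightarrow> 'a) \<Rightarrow> ('b \<Rightarrow> 'b). cc_hom A \<pi> \<longrightarrow> cc_hom (LA A le e) \<pi> \<and> (nondegenerate A \<pi> \<longrightarrow> nondegenerate (LA A le e) \<pi>)"
      by (intro allI impI) (rule part1)
    show "\<forall>\<theta> :: ('a \<Rightarrow> 'a) \<Rightarrow> ('b \<Rightarrow> 'b). cc_hom (LA A le e) \<theta> \<longrightarrow>
         (\<exists>\<pi>. cc_hom A \<pi> \<and> (\<forall>x\<in>LA A le e. \<pi> x = \<theta> x)) \<and>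
         (nondegenerate (LA A le e) \<theta> \<longrightarrow>
          (\<exists>\<pi>. cc_hom A \<pi> \<and> (\<forall>x\<in>LA A le e. \<pi> x = \<theta> x) \<and> nondegenerate A \<pi> \<and>
               (\<forall>\<pi>'. cc_hom A \<pi>' \<and> (\<forall>x\<in>LA A le e. \<pi>' x = \<theta> x) \<longrightarrow> (\<forall>a\<in>A. \<pi>' a = \<pi> a))))"
      by (intro allI impI) (rule part2)
    show "\<forall>\<pi> :: ('a \<Rightarrow> 'a) \<Rightarrow> ('b \<Rightarrow> 'b). cc_hom A \<pi> \<longrightarrow> {T \<in> BH. \<forall>a\<in>A. T \<circ> \<pi> a \<in> \<pi> ` A} = {T \<in> BH. \<forall>a\<in>LA A le e. T \<circ> \<pi> a \<in> \<pi> ` LA A le e}"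
      by (intro allI impI) (rule part3)
  qed
qed

end
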